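(* Let $(w_s,\eta_s)$ be the soliton-like traveling wave (homoclinic solution) with parameters satisfying $\frac{\beta(\nu+1)}{2(\nu+2)\eta_\infty^{\nu+3}}<s^2<\frac{\beta}{\eta_\infty^{\nu+3}}$. Then the generalized eigenvalue problem $\kappa M''=\big[\gamma-\mu+\frac{s^2}{\mu-(\nu+2)\eta_s(z)^{-(\nu+3)}}\big]M$ on $\mathbb{R}$ has at most one eigenvalue $\mu<0$ with a nonzero eigenfunction $M\in L^2(\mathbb{R})$ (decaying with its derivative at $\pm\infty$). If such $\mu$ exists, it is an eigenvalue of $\mathcal{L}^s$ with eigenfunction $\big(M,\ sM\,(\mu-(\nu+2)\eta_s^{-(\nu+3)})^{-1}\big)^{tr}$.
   Context: Fix $\beta>0$, $\nu>-1$, $\kappa>0$, $\gamma=\beta/(\nu+2)$, $\eta_\infty>0$. The soliton-like traveling wave is a non-constant smooth pair $(w_s(z),\eta_s(z))$ with $\eta_s>0$, satisfying $s w_s+\eta_\infty^{-(\nu+2)}-\eta_s^{-(\nu+2)}=0$, $(\gamma-\kappa\partial_z^2)w_s+s(\eta_s-\eta_\infty)=0$, $w_s\to0$, $\eta_s\to\eta_\infty$ as $|z|\to\infty$. $\mathcal{L}^s=\begin{pmatrix}\gamma-\kappa\partial_z^2 & s\\ s & (\nu+2)\eta_s(z)^{-(\nu+3)}\end{pmatrix}$ on $L^2(\mathbb{R})^2$. *)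

theory Defs
  imports "HOL-Analysis.Analysis"
begin

definition smooth_real :: "(real \<Rightarrow> real) \<Rightarrow> bool" where
  "smooth_real f \<longleftrightarrow> (\<forall>n. (deriv ^^ n) f differentiable_on UNIV)"

definition sq_integrable :: "(real \<Rightarrow> real) \<Rightarrow> bool" where
  "sq_integrable f \<longleftrightarrow> f \<in> borel_measurable lborel \<and> integrable lborel (\<lambda>z. (f z)\<^sup>2)"

definition gam :: "real \<Rightarrow> real \<Rightarrow> real" where
  "gam \<beta> \<nu> = \<beta> / (\<nu> + 2)"

definition soliton ::
  "real \<Rightarrow> real \<Rightarrow> real \<Rightarrow> real \<Rightarrow> real \<Rightarrow> (real \<Rightarrow> real) \<Rightarrow> (real \<Rightarrow> real) \<Rightarrow> bool" where
  "soliton \<beta> \<nu> \<kappa> \<eta>inf s w \<eta> \<longleftrightarrow>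
     smooth_real w \<and> smooth_real \<eta> \<and>
     (\<forall>z. \<eta> z > 0) \<and>
     (\<exists>z1 z2. (w z1, \<eta> z1) \<noteq> (w z2, \<eta> z2)) \<and>
     (\<forall>z. s * w z + \<eta>inf powr (-(\<nu>+2)) - \<eta> z powr (-(\<nu>+2)) = 0) \<and>
     (\<forall>z. gam \<beta> \<nu> * w z - \<kappa> * (deriv (deriv w)) z + s * (\<eta> z - \<eta>inf) = 0) \<and>
     (w \<longlongrightarrow> 0) at_top \<and> (w \<longlongrightarrow> 0) at_bot \<and>
     (\<eta> \<longlongrightarrow> \<eta>inf) at_top \<and> (\<eta> \<longlongrightarrow> \<eta>inf) at_bot"

definition gen_eigenfun ::
  "real \<Rightarrow> real \<Rightarrow> real \<Rightarrow> real \<Rightarrow> (real \<Rightarrow> real) \<Rightarrow> real \<Rightarrow> (real \<Rightarrow> real) \<Rightarrow> bool" where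
  "gen_eigenfun \<beta> \<nu> \<kappa> s \<eta> \<mu> M \<longleftrightarrow>
     (\<exists>M' M''. (\<forall>z. (M has_real_derivative M' z) (at z)) \<and>
               (\<forall>z. (M' has_real_derivative M'' z) (at z)) \<and>
               (\<forall>z. \<kappa> * M'' z =
                      (gam \<beta> \<nu> - \<mu> + s\<^sup>2 / (\<mu> - (\<nu>+2) * \<eta> z powr (-(\<nu>+3)))) * M z) \<and>
               (M \<longlongrightarrow> 0) at_top \<and> (M \<longlongrightarrow> 0) at_bot \<and>
               (M' \<longlongrightarrow> 0) at_top \<and> (M' \<longlongrightarrow> 0) at_bot) \<and>
     sq_integrable M \<and> M \<noteq> (\<lambda>z. 0)"

definition Ls_eigenpair ::
  "real \<Rightarrow> real \<Rightarrow> real \<Rightarrow> real \<Rightarrow> (real \<Rightarrow> real) \<Rightarrow> real \<Rightarrow> (real \<Rightarrow> real) \<Rightarrow> (real \<Rightarrow> real) \<Rightarrow> bool" where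
  "Ls_eigenpair \<beta> \<nu> \<kappa> s \<eta> \<mu> U V \<longleftrightarrow>
     (\<exists>U' U''. (\<forall>z. (U has_real_derivative U' z) (at z)) \<and>
               (\<forall>z. (U' has_real_derivative U'' z) (at z)) \<and>
               sq_integrable U' \<and> sq_integrable U'' \<and>
               (\<forall>z. gam \<beta> \<nu> * U z - \<kappa> * U'' z + s * V z = \<mu> * U z) \<and>
               (\<forall>z. s * U z + (\<nu>+2) * \<eta> z powr (-(\<nu>+3)) * V z = \<mu> * V z)) \<and>
     sq_integrable U \<and> sq_integrable V \<and>
     (U, V) \<noteq> ((\<lambda>z. 0), (\<lambda>z. 0))"

end

theory Submission
  imports Defs
begin

lemma sturm_core:
  fixes W W' :: "real \<Rightarrow> real" and I :: "real set"
  assumes I: "is_interval I" "open I"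
    and d: "\<And>x. x \<in> I \<Longrightarrow> (W has_real_derivative W' x) (at x)"
    and nn: "\<And>x. x \<in> I \<Longrightarrow> W' x \<ge> 0"
    and t: "t \<in> I" "W' t > 0"
    and L: "\<And>\<epsilon> x0. \<epsilon> > 0 \<Longrightarrow> x0 \<in> I \<Longrightarrow> \<exists>x\<in>I. x \<le> x0 \<and> W x > -\<epsilon>"
    and R: "\<And>\<epsilon> y0. \<epsilon> > 0 \<Longrightarrow> y0 \<in> I \<Longrightarrow> \<exists>y\<in>I. y \<ge> y0 \<and> W y < \<epsilon>"
  shows False
proof -
  have mono: "W x \<le> W y" if "x \<in> I" "y \<in> I" "x \<le> y" for x y
  proof (rule DERIV_nonneg_imp_nondecreasing[OF \<open>x \<le> y\<close>])
    fix z assume "x \<le> z" "z \<le> y"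
    then have "z \<in> I" using I(1) that unfolding is_interval_1 by blast
    then show "\<exists>l. (W has_real_derivative l) (at z) \<and> l \<ge> 0" using d nn by blast
  qed
  obtain e where e: "e > 0" "ball t e \<subseteq> I" using I(2) t(1) openE by blast
  obtain d1 where d1: "d1 > 0" "\<And>h. h > 0 \<Longrightarrow> h < d1 \<Longrightarrow> W t < W (t + h)"
    using DERIV_pos_inc_right[OF d[OF t(1)] t(2)] by blast
  obtain d2 where d2: "d2 > 0" "\<And>h. h > 0 \<Longrightarrow> h < d2 \<Longrightarrow> W (t - h) < W t"
    using DERIV_pos_inc_left[OF d[OF t(1)] t(2)] by blast
  define h where "h = min e (min d1 d2) / 2"
  have h: "h > 0" "h < e" "h < d1" "h < d2" using e d1 d2 by (auto simp: h_def)
  have x1: "t - h \<in> I" "t + h \<in> I" using e(2) h by (auto simp: dist_real_def)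
  have lt: "W (t - h) < W (t + h)" using d1(2)[OF h(1) h(3)] d2(2)[OF h(1) h(4)] by simp
  define \<delta> where "\<delta> = W (t + h) - W (t - h)"
  have "\<delta> > 0" using lt by (simp add: \<delta>_def)
  obtain x where x: "x \<in> I" "x \<le> t - h" "W x > -\<delta>/2" using L[of "\<delta>/2" "t - h"] \<open>\<delta>>0\<close> x1 by auto
  obtain y where y: "y \<in> I" "y \<ge> t + h" "W y < \<delta>/2" using R[of "\<delta>/2" "t + h"] \<open>\<delta>>0\<close> x1 by auto
  have "W x \<le> W (t - h)" using mono x x1 by blast
  moreover have "W (t + h) \<le> W y" using mono y x1 by blast
  ultimately show False using x y by (simp add: \<delta>_def)
qed


lemma ereal_lt_b: "x \<le> y \<Longrightarrow> ereal y < b \<Longrightarrow> ereal x < b"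
  by (rule le_less_trans[of _ "ereal y"]) simp_all
lemma ereal_a_lt: "a < ereal x \<Longrightarrow> x \<le> y \<Longrightarrow> a < ereal y"
  by (rule less_le_trans[of _ "ereal x"]) simp_all

lemma sturm:
  fixes u u' u'' v v' v'' p r :: "real \<Rightarrow> real" and a b :: ereal and t :: real
  assumes du: "\<And>z. (u has_real_derivative u' z) (at z)" "\<And>z. (u' has_real_derivative u'' z) (at z)"
    and dv: "\<And>z. (v has_real_derivative v' z) (at z)" "\<And>z. (v' has_real_derivative v'' z) (at z)"
    and eqs: "\<And>z. u'' z = p z * u z" "\<And>z. v'' z = r z * v z"
    and t: "a < ereal t" "ereal t < b"
    and upos: "\<And>x. a < ereal x \<Longrightarrow> ereal x < b \<Longrightarrow> u x > 0"
    and vnn: "\<And>x. a \<le> ereal x \<Longrightarrow> ereal x \<le> b \<Longrightarrow> v x \<ge> 0"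
    and pr: "\<And>x. a < ereal x \<Longrightarrow> ereal x < b \<Longrightarrow> p x \<ge> r x"
    and prt: "p t > r t" and vt: "v t > 0"
    and ua: "\<And>a'. a = ereal a' \<Longrightarrow> u a' = 0"
    and ub: "\<And>b'. b = ereal b' \<Longrightarrow> u b' = 0"
    and la: "a = -\<infinity> \<Longrightarrow> ((\<lambda>z. u' z * v z - u z * v' z) \<longlongrightarrow> 0) at_bot"
    and lb: "b = \<infinity> \<Longrightarrow> ((\<lambda>z. u' z * v z - u z * v' z) \<longlongrightarrow> 0) at_top"
  shows False
proof -
  define W where "W = (\<lambda>z. u' z * v z - u z * v' z)"
  define I where "I = {x. a < ereal x \<and> ereal x < b}"
  have dW: "(W has_real_derivative (p z - r z) * u z * v z) (at z)" for z
  proof -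
    have "(W has_real_derivative (u'' z * v z + v' z * u' z) - (u' z * v' z + v'' z * u z)) (at z)"
      unfolding W_def by (rule DERIV_diff[OF DERIV_mult[OF du(2) dv(1)] DERIV_mult[OF du(1) dv(2)]])
    then show ?thesis by (simp add: eqs algebra_simps)
  qed
  have contW: "isCont W z" for z using dW by (rule DERIV_isCont)
  have ivl: "is_interval I" unfolding is_interval_1 I_def
  proof (clarsimp)
    fix x y z assume "a < ereal x" "ereal x < b" "a < ereal y" "ereal y < b" "x \<le> z" "z \<le> y"
    then show "a < ereal z \<and> ereal z < b"
      by (meson ereal_less_eq(3) order.strict_trans1 order.strict_trans2)
  qed
  have a_ne: "a \<noteq> \<infinity>" and b_ne: "b \<noteq> -\<infinity>" using t by auto
  have o1: "open {x. a < ereal x}"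
  proof (cases a)
    case (real a') then have "{x. a < ereal x} = {a'<..}" by auto
    then show ?thesis by simp
  qed (use a_ne in auto)
  have o2: "open {x. ereal x < b}"
  proof (cases b)
    case (real b') then have "{x. ereal x < b} = {..<b'}" by auto
    then show ?thesis by simp
  qed (use b_ne in auto)
  have opn: "open I" using open_Int[OF o1 o2] by (simp add: I_def Collect_conj_eq)
  show False
  proof (rule sturm_core[OF ivl opn, of W "\<lambda>z. (p z - r z) * u z * v z" t])
    show "(W has_real_derivative (p x - r x) * u x * v x) (at x)" for x by (rule dW)
    show "0 \<le> (p x - r x) * u x * v x" if "x \<in> I" for x
      using that upos[of x] vnn[of x] pr[of x] by (auto simp: I_def intro!: mult_nonneg_nonneg)
    show "t \<in> I" using t by (simp add: I_def)
    show "0 < (p t - r t) * u t * v t" using prt vt upos[of t] t by simp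
  next
    fix \<epsilon> x0 :: real assume \<epsilon>: "\<epsilon> > 0" and x0: "x0 \<in> I"
    show "\<exists>x\<in>I. x \<le> x0 \<and> - \<epsilon> < W x"
    proof (cases a)
      case MInf
      have "eventually (\<lambda>x. dist (W x) 0 < \<epsilon>) at_bot"
        using la[OF MInf] \<epsilon> unfolding W_def tendsto_iff by blast
      then obtain N where N: "\<And>x. x \<le> N \<Longrightarrow> dist (W x) 0 < \<epsilon>" by (auto simp: eventually_at_bot_linorder)
      define x where "x = min N x0"
      have "ereal x \<le> ereal x0" by (simp add: x_def)
      moreover have "ereal x0 < b" using x0 by (simp add: I_def)
      ultimately have "ereal x < b" by (rule le_less_trans)
      then have "x \<in> I" using MInf by (auto simp: I_def)
      moreover have "- \<epsilon> < W x" using N[of x] by (auto simp: x_def dist_real_def)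
      ultimately show ?thesis by (intro bexI[of _ x]) (auto simp: x_def)
    next
      case PInf with a_ne show ?thesis by simp
    next
      case (real a')
      have ua': "u a' = 0" by (rule ua[OF real])
      have at: "a' < t" using t real by simp
      have "u' a' \<ge> 0"
      proof (rule ccontr)
        assume "\<not> u' a' \<ge> 0"
        then obtain d where d: "d > 0" "\<And>h. h > 0 \<Longrightarrow> h < d \<Longrightarrow> u a' > u (a' + h)"
          using DERIV_neg_dec_right[OF du(1)[of a']] by force
        define h where "h = min d (t - a') / 2"
        have "h > 0" "h < d" "a' + h < t" using d(1) at unfolding h_def by (simp_all add: min_def split: if_split) (auto simp: field_simps)
        then have "ereal (a' + h) < ereal t" by simp
        then have "ereal (a' + h) < b" using t(2) by (rule less_trans)
        then have "u (a' + h) > 0" using upos[of "a' + h"] real \<open>h > 0\<close> by auto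
        with d(2)[OF \<open>h>0\<close> \<open>h<d\<close>] ua' show False by simp
      qed
      moreover have "ereal a' < ereal t" using at by simp
      then have "ereal a' < b" using t(2) by (rule less_trans)
      then have "v a' \<ge> 0" using vnn[of a'] real by auto
      ultimately have Wa: "W a' \<ge> 0" by (simp add: W_def ua')
      obtain \<delta> where \<delta>: "\<delta> > 0" "\<And>x. dist x a' < \<delta> \<Longrightarrow> dist (W x) (W a') < \<epsilon>"
        using contW[of a'] \<epsilon> unfolding continuous_at_eps_delta by blast
      have x0a: "a' < x0" using x0 real by (simp add: I_def)
      define x where "x = a' + min \<delta> (x0 - a') / 2"
      have xs: "a' < x" "x \<le> x0" "dist x a' < \<delta>" using \<delta>(1) x0a unfolding x_def dist_real_def by (simp_all add: min_def split: if_split) (auto simp: field_simps)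
      have "x \<in> I" using xs x0 real ereal_lt_b[of x x0 b] by (auto simp: I_def)
      moreover have "- \<epsilon> < W x" using \<delta>(2)[OF xs(3)] Wa by (auto simp: dist_real_def)
      ultimately show ?thesis using xs by auto
    qed
  next
    fix \<epsilon> y0 :: real assume \<epsilon>: "\<epsilon> > 0" and y0: "y0 \<in> I"
    show "\<exists>y\<in>I. y0 \<le> y \<and> W y < \<epsilon>"
    proof (cases b)
      case PInf
      have "eventually (\<lambda>x. dist (W x) 0 < \<epsilon>) at_top"
        using lb[OF PInf] \<epsilon> unfolding W_def tendsto_iff by blast
      then obtain N where N: "\<And>x. x \<ge> N \<Longrightarrow> dist (W x) 0 < \<epsilon>" by (auto simp: eventually_at_top_linorder)
      define y where "y = max N y0"
      have "ereal y0 \<le> ereal y" by (simp add: y_def)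
      moreover have "a < ereal y0" using y0 by (simp add: I_def)
      ultimately have "a < ereal y" by (metis less_le_trans)
      then have "y \<in> I" using PInf by (auto simp: I_def)
      moreover have "W y < \<epsilon>" using N[of y] by (auto simp: y_def dist_real_def)
      ultimately show ?thesis by (intro bexI[of _ y]) (auto simp: y_def)
    next
      case MInf with b_ne show ?thesis by simp
    next
      case (real b')
      have ub': "u b' = 0" by (rule ub[OF real])
      have bt: "t < b'" using t real by simp
      have "u' b' \<le> 0"
      proof (rule ccontr)
        assume "\<not> u' b' \<le> 0"
        then obtain d where d: "d > 0" "\<And>h. h > 0 \<Longrightarrow> h < d \<Longrightarrow> u (b' - h) < u b'"
          using DERIV_pos_inc_left[OF du(1)[of b']] by force
        define h where "h = min d (b' - t) / 2"
        have "h > 0" "h < d" "t < b' - h" using d(1) bt unfolding h_def by (simp_all add: min_def split: if_split) (auto simp: field_simps)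
        then have "ereal t < ereal (b' - h)" by simp
        then have "a < ereal (b' - h)" using t(1) by (rule less_trans[rotated])
        then have "u (b' - h) > 0" using upos[of "b' - h"] real \<open>h > 0\<close> by auto
        with d(2)[OF \<open>h>0\<close> \<open>h<d\<close>] ub' show False by simp
      qed
      moreover have "ereal t < ereal b'" using bt by simp
      then have "a < ereal b'" using t(1) by (rule less_trans[rotated])
      then have "v b' \<ge> 0" using vnn[of b'] real by auto
      ultimately have Wb: "W b' \<le> 0" by (simp add: W_def ub' mult_nonpos_nonneg)
      obtain \<delta> where \<delta>: "\<delta> > 0" "\<And>x. dist x b' < \<delta> \<Longrightarrow> dist (W x) (W b') < \<epsilon>"
        using contW[of b'] \<epsilon> unfolding continuous_at_eps_delta by blast
      have y0b: "y0 < b'" using y0 real by (simp add: I_def)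
      define y where "y = b' - min \<delta> (b' - y0) / 2"
      have ys: "y < b'" "y0 \<le> y" "dist y b' < \<delta>" using \<delta>(1) y0b unfolding y_def dist_real_def by (simp_all add: min_def split: if_split) (auto simp: field_simps)
      have "y \<in> I" using ys y0 real ereal_a_lt[of a y0 y] by (auto simp: I_def)
      moreover have "W y < \<epsilon>" using \<delta>(2)[OF ys(3)] Wb by (auto simp: dist_real_def)
      ultimately show ?thesis using ys by auto
    qed
  qed
qed


lemma comp_left:
  fixes u :: "real \<Rightarrow> real"
  assumes cont: "\<And>x. isCont u x" and pos: "u x0 > 0"
  shows "\<exists>a::ereal. a < ereal x0 \<and> (\<forall>x. a < ereal x \<and> x \<le> x0 \<longrightarrow> u x > 0) \<and> (\<forall>a'. a = ereal a' \<longrightarrow> u a' = 0)"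
proof (cases "{x. x \<le> x0 \<and> u x \<le> 0} = {}")
  case True
  then show ?thesis by (intro exI[of _ "-\<infinity>"]) force
next
  case False
  define S where "S = {x. x \<le> x0 \<and> u x \<le> 0}"
  have cl: "closed S" unfolding S_def
    by (intro closed_Collect_conj closed_Collect_le continuous_intros continuous_at_imp_continuous_on) (auto simp: cont)
  have bdd: "bdd_above S" by (auto simp: S_def bdd_above_def)
  define a' where "a' = Sup S"
  have "a' \<in> S" unfolding a'_def using closed_contains_Sup[OF _ bdd cl] False by (simp add: S_def)
  then have a1: "a' \<le> x0" "u a' \<le> 0" by (auto simp: S_def)
  have a2: "a' < x0" using a1 pos by (cases "a' = x0") auto
  have right: "u x > 0" if "a' < x" "x \<le> x0" for x
  proof (rule ccontr)
    assume "\<not> u x > 0"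
    then have "x \<in> S" using that by (auto simp: S_def)
    then have "x \<le> a'" unfolding a'_def using bdd by (rule cSup_upper)
    with that show False by simp
  qed
  have "u a' = 0"
  proof (rule ccontr)
    assume "u a' \<noteq> 0"
    then have "u a' < 0" using a1 by simp
    then obtain c where c: "c \<ge> a'" "c \<le> x0" "u c = 0"
      using IVT[of u a' 0 x0] a2 pos cont by force
    then have "c \<noteq> a'" using \<open>u a' < 0\<close> by auto
    then show False using right[of c] c by simp
  qed
  then show ?thesis using a2 right by (intro exI[of _ "ereal a'"]) auto
qed

lemma comp_right:
  fixes u :: "real \<Rightarrow> real"
  assumes cont: "\<And>x. isCont u x" and pos: "u x0 > 0"
  shows "\<exists>b::ereal. ereal x0 < b \<and> (\<forall>x. x0 \<le> x \<and> ereal x < b \<longrightarrow> u x > 0) \<and> (\<forall>b'. b = ereal b' \<longrightarrow> u b' = 0)"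
proof (cases "{x. x0 \<le> x \<and> u x \<le> 0} = {}")
  case True
  then show ?thesis by (intro exI[of _ "\<infinity>"]) force
next
  case False
  define S where "S = {x. x0 \<le> x \<and> u x \<le> 0}"
  have cl: "closed S" unfolding S_def
    by (intro closed_Collect_conj closed_Collect_le continuous_intros continuous_at_imp_continuous_on) (auto simp: cont)
  have bdd: "bdd_below S" by (auto simp: S_def bdd_below_def)
  define b' where "b' = Inf S"
  have "b' \<in> S" unfolding b'_def using closed_contains_Inf[OF _ bdd cl] False by (simp add: S_def)
  then have b1: "x0 \<le> b'" "u b' \<le> 0" by (auto simp: S_def)
  have b2: "x0 < b'" using b1 pos by (cases "b' = x0") auto
  have left: "u x > 0" if "x0 \<le> x" "x < b'" for x
  proof (rule ccontr)
    assume "\<not> u x > 0"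
    then have "x \<in> S" using that by (auto simp: S_def)
    then have "b' \<le> x" unfolding b'_def using bdd by (rule cInf_lower)
    with that show False by simp
  qed
  have "u b' = 0"
  proof (rule ccontr)
    assume "u b' \<noteq> 0"
    then have "u b' < 0" using b1 by simp
    then obtain c where c: "c \<ge> x0" "c \<le> b'" "u c = 0"
      using IVT2[of u b' 0 x0] b2 pos cont by force
    then have "c \<noteq> b'" using \<open>u b' < 0\<close> by auto
    then show False using left[of c] c by simp
  qed
  then show ?thesis using b2 left by (intro exI[of _ "ereal b'"]) auto
qed

lemma component:
  fixes u :: "real \<Rightarrow> real"
  assumes cont: "\<And>x. isCont u x" and pos: "u x0 > 0"
  shows "\<exists>a b :: ereal. a < ereal x0 \<and> ereal x0 < b \<and> (\<forall>x. a < ereal x \<and> ereal x < b \<longrightarrow> u x > 0)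
     \<and> (\<forall>a'. a = ereal a' \<longrightarrow> u a' = 0) \<and> (\<forall>b'. b = ereal b' \<longrightarrow> u b' = 0)"
proof -
  obtain a where a: "a < ereal x0" "\<forall>x. a < ereal x \<and> x \<le> x0 \<longrightarrow> u x > 0" "\<forall>a'. a = ereal a' \<longrightarrow> u a' = 0"
    using comp_left[OF cont pos] by blast
  obtain b where b: "ereal x0 < b" "\<forall>x. x0 \<le> x \<and> ereal x < b \<longrightarrow> u x > 0" "\<forall>b'. b = ereal b' \<longrightarrow> u b' = 0"
    using comp_right[OF cont pos] by blast
  have "u x > 0" if "a < ereal x" "ereal x < b" for x
    using a(2) b(2) that by (cases "x \<le> x0") auto
  then show ?thesis using a b by blast
qed


lemma deriv_tendsto_top:
  fixes f f' f'' :: "real \<Rightarrow> real"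
  assumes d1: "\<And>x. (f has_real_derivative f' x) (at x)" and d2: "\<And>x. (f' has_real_derivative f'' x) (at x)"
    and l0: "(f \<longlongrightarrow> 0) at_top" and l2: "(f'' \<longlongrightarrow> 0) at_top"
  shows "(f' \<longlongrightarrow> 0) at_top"
proof -
  have key: "\<exists>y1 y2. y1 \<ge> x \<and> y2 \<ge> x \<and> \<bar>f' x\<bar> \<le> \<bar>f (x+1)\<bar> + \<bar>f x\<bar> + \<bar>f'' y2\<bar>" for x
  proof -
    obtain z1 where z1: "x < z1" "z1 < x + 1" "f (x+1) - f x = (x + 1 - x) * f' z1"
      using MVT2[of x "x+1" f f'] d1 by auto
    obtain z2 where z2: "x < z2" "z2 < z1" "f' z1 - f' x = (z1 - x) * f'' z2"
      using MVT2[of x z1 f' f''] d2 z1 by auto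
    have "\<bar>(z1 - x) * f'' z2\<bar> \<le> \<bar>f'' z2\<bar>" using z1 z2 by (simp add: abs_mult mult_left_le_one_le)
    moreover have "f' z1 = f (x+1) - f x" using z1(3) by simp
    ultimately have "\<bar>f' x\<bar> \<le> \<bar>f (x+1)\<bar> + \<bar>f x\<bar> + \<bar>f'' z2\<bar>" using z2(3) by (smt (verit))
    then show ?thesis using z2 by (intro exI[of _ "x+1"] exI[of _ z2]) auto
  qed
  show ?thesis unfolding tendsto_iff
  proof (intro allI impI)
    fix \<epsilon> :: real assume \<epsilon>: "\<epsilon> > 0"
    have "eventually (\<lambda>x. dist (f x) 0 < \<epsilon>/3) at_top" using tendstoD[OF l0, of "\<epsilon>/3"] \<epsilon> by simp
    then obtain N1 where N1: "\<And>x. x \<ge> N1 \<Longrightarrow> \<bar>f x\<bar> < \<epsilon>/3" by (auto simp: eventually_at_top_linorder)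
    have "eventually (\<lambda>x. dist (f'' x) 0 < \<epsilon>/3) at_top" using tendstoD[OF l2, of "\<epsilon>/3"] \<epsilon> by simp
    then obtain N2 where N2: "\<And>x. x \<ge> N2 \<Longrightarrow> \<bar>f'' x\<bar> < \<epsilon>/3" by (auto simp: eventually_at_top_linorder)
    show "eventually (\<lambda>x. dist (f' x) 0 < \<epsilon>) at_top" unfolding eventually_at_top_linorder
    proof (intro exI[of _ "max N1 N2"] allI impI)
      fix x assume x: "x \<ge> max N1 N2"
      obtain y1 y2 where y: "y1 \<ge> x" "y2 \<ge> x" "\<bar>f' x\<bar> \<le> \<bar>f (x+1)\<bar> + \<bar>f x\<bar> + \<bar>f'' y2\<bar>" using key by blast
      have "\<bar>f (x+1)\<bar> < \<epsilon>/3" "\<bar>f x\<bar> < \<epsilon>/3" "\<bar>f'' y2\<bar> < \<epsilon>/3" using N1 N2 x y by auto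
      then show "dist (f' x) 0 < \<epsilon>" using y by simp
    qed
  qed
qed

lemma deriv_tendsto_bot:
  fixes f f' f'' :: "real \<Rightarrow> real"
  assumes d1: "\<And>x. (f has_real_derivative f' x) (at x)" and d2: "\<And>x. (f' has_real_derivative f'' x) (at x)"
    and l0: "(f \<longlongrightarrow> 0) at_bot" and l2: "(f'' \<longlongrightarrow> 0) at_bot"
  shows "(f' \<longlongrightarrow> 0) at_bot"
proof -
  have key: "\<exists>y2. y2 \<le> x \<and> \<bar>f' x\<bar> \<le> \<bar>f (x-1)\<bar> + \<bar>f x\<bar> + \<bar>f'' y2\<bar>" for x
  proof -
    obtain z1 where z1: "x - 1 < z1" "z1 < x" "f x - f (x - 1) = (x - (x - 1)) * f' z1"
      using MVT2[of "x - 1" x f f'] d1 by auto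
    obtain z2 where z2: "z1 < z2" "z2 < x" "f' x - f' z1 = (x - z1) * f'' z2"
      using MVT2[of z1 x f' f''] d2 z1 by auto
    have "\<bar>(x - z1) * f'' z2\<bar> \<le> \<bar>f'' z2\<bar>" using z1 z2 by (simp add: abs_mult mult_left_le_one_le)
    moreover have "f' z1 = f x - f (x - 1)" using z1(3) by simp
    ultimately have "\<bar>f' x\<bar> \<le> \<bar>f (x-1)\<bar> + \<bar>f x\<bar> + \<bar>f'' z2\<bar>" using z2(3) by (smt (verit))
    then show ?thesis using z2 by (intro exI[of _ z2]) auto
  qed
  show ?thesis unfolding tendsto_iff
  proof (intro allI impI)
    fix \<epsilon> :: real assume \<epsilon>: "\<epsilon> > 0"
    have "eventually (\<lambda>x. dist (f x) 0 < \<epsilon>/3) at_bot" using tendstoD[OF l0, of "\<epsilon>/3"] \<epsilon> by simp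
    then obtain N1 where N1: "\<And>x. x \<le> N1 \<Longrightarrow> \<bar>f x\<bar> < \<epsilon>/3" by (auto simp: eventually_at_bot_linorder)
    have "eventually (\<lambda>x. dist (f'' x) 0 < \<epsilon>/3) at_bot" using tendstoD[OF l2, of "\<epsilon>/3"] \<epsilon> by simp
    then obtain N2 where N2: "\<And>x. x \<le> N2 \<Longrightarrow> \<bar>f'' x\<bar> < \<epsilon>/3" by (auto simp: eventually_at_bot_linorder)
    show "eventually (\<lambda>x. dist (f' x) 0 < \<epsilon>) at_bot" unfolding eventually_at_bot_linorder
    proof (intro exI[of _ "min N1 N2"] allI impI)
      fix x assume x: "x \<le> min N1 N2"
      obtain y2 where y: "y2 \<le> x" "\<bar>f' x\<bar> \<le> \<bar>f (x-1)\<bar> + \<bar>f x\<bar> + \<bar>f'' y2\<bar>" using key by blast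
      have "\<bar>f (x-1)\<bar> < \<epsilon>/3" "\<bar>f x\<bar> < \<epsilon>/3" "\<bar>f'' y2\<bar> < \<epsilon>/3" using N1 N2 x y by auto
      then show "dist (f' x) 0 < \<epsilon>" using y by simp
    qed
  qed
qed


locale sol =
  fixes \<beta> \<nu> \<kappa> e s :: real and w \<eta> :: "real \<Rightarrow> real"
  assumes \<beta>: "\<beta> > 0" and \<nu>: "\<nu> > -1" and \<kappa>: "\<kappa> > 0" and e: "e > 0"
    and sol: "soliton \<beta> \<nu> \<kappa> e s w \<eta>" and s0: "s \<noteq> 0"
begin

definition "w1 = deriv w"
definition "w2 = deriv w1"
definition "w3 = deriv w2"
definition "\<eta>1 = deriv \<eta>"
definition "\<gamma> = gam \<beta> \<nu>"
definition "cc z = (\<nu>+2) * \<eta> z powr (-(\<nu>+3))"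
definition "Q0 z = \<gamma> - s\<^sup>2 / cc z"

lemma \<gamma>pos: "\<gamma> > 0" using \<beta> \<nu> by (simp add: \<gamma>_def gam_def)

lemma smooth_w: "smooth_real w" and smooth_\<eta>: "smooth_real \<eta>"
  and \<eta>pos: "\<And>z. \<eta> z > 0"
  and nonconst: "\<exists>z1 z2. (w z1, \<eta> z1) \<noteq> (w z2, \<eta> z2)"
  and eq1: "\<And>z. s * w z + e powr (-(\<nu>+2)) - \<eta> z powr (-(\<nu>+2)) = 0"
  and eq2: "\<And>z. gam \<beta> \<nu> * w z - \<kappa> * (deriv (deriv w)) z + s * (\<eta> z - e) = 0"
  and wtop: "(w \<longlongrightarrow> 0) at_top" and wbot: "(w \<longlongrightarrow> 0) at_bot"
  and \<eta>top: "(\<eta> \<longlongrightarrow> e) at_top" and \<eta>bot: "(\<eta> \<longlongrightarrow> e) at_bot"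
  using sol unfolding soliton_def by blast+

lemma smooth_D: "smooth_real f \<Longrightarrow> ((deriv ^^ n) f has_real_derivative (deriv ^^ (Suc n)) f z) (at z)"
  unfolding smooth_real_def
  by (metis DERIV_deriv_iff_real_differentiable UNIV_I comp_apply differentiable_on_def
      funpow.simps(2) open_UNIV at_within_open)

lemma dw: "(w has_real_derivative w1 z) (at z)"
  using smooth_D[OF smooth_w, of 0] by (simp add: w1_def)
lemma dw1: "(w1 has_real_derivative w2 z) (at z)"
  using smooth_D[OF smooth_w, of 1] by (simp add: w1_def w2_def)
lemma dw2: "(w2 has_real_derivative w3 z) (at z)"
  using smooth_D[OF smooth_w, of 2] by (simp add: w1_def w2_def w3_def numeral_2_eq_2)
lemma d\<eta>: "(\<eta> has_real_derivative \<eta>1 z) (at z)"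
  using smooth_D[OF smooth_\<eta>, of 0] by (simp add: \<eta>1_def)

lemma cont_w: "isCont w z" using dw by (rule DERIV_isCont)
lemma cont_w1: "isCont w1 z" using dw1 by (rule DERIV_isCont)
lemma cont_\<eta>: "isCont \<eta> z" using d\<eta> by (rule DERIV_isCont)

lemma kne: "\<kappa> \<noteq> 0" using \<kappa> by simp

lemma ccpos: "cc z > 0" using \<eta>pos[of z] \<nu> by (simp add: cc_def)

lemma \<eta>1_eq: "\<eta>1 z = - s * w1 z / cc z"
proof -
  have "((\<lambda>z. s * w z + e powr (-(\<nu>+2)) - \<eta> z powr (-(\<nu>+2))) has_real_derivative
      s * w1 z + 0 - (-(\<nu>+2)) * \<eta> z powr (-(\<nu>+2) - real 1) * \<eta>1 z) (at z)"
    by (intro DERIV_diff DERIV_add DERIV_cmult dw DERIV_const DERIV_fun_powr d\<eta> \<eta>pos)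
  moreover have "(\<lambda>z. s * w z + e powr (-(\<nu>+2)) - \<eta> z powr (-(\<nu>+2))) = (\<lambda>z. 0)" using eq1 by auto
  ultimately have "s * w1 z + 0 - (-(\<nu>+2)) * \<eta> z powr (-(\<nu>+2) - real 1) * \<eta>1 z = 0"
    using DERIV_unique DERIV_const by metis
  moreover have ex: "-(\<nu>+2) - real 1 = -(\<nu>+3)" by simp
  ultimately have "s * w1 z + cc z * \<eta>1 z = 0" unfolding ex cc_def by (simp add: algebra_simps)
  then show ?thesis using ccpos[of z] by (simp add: field_simps)
qed

lemma w2_eq: "\<kappa> * w2 z = \<gamma> * w z + s * (\<eta> z - e)"
  using eq2[of z] by (simp add: w1_def w2_def \<gamma>_def)

lemma w3_eq: "\<kappa> * w3 z = Q0 z * w1 z"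
proof -
  have "((\<lambda>z. \<kappa> * w2 z) has_real_derivative \<kappa> * w3 z) (at z)" by (intro DERIV_cmult dw2)
  moreover have "((\<lambda>z. \<gamma> * w z + s * (\<eta> z - e)) has_real_derivative \<gamma> * w1 z + s * (\<eta>1 z - 0)) (at z)"
    by (intro DERIV_add DERIV_cmult dw DERIV_diff d\<eta> DERIV_const)
  moreover have "(\<lambda>z. \<kappa> * w2 z) = (\<lambda>z. \<gamma> * w z + s * (\<eta> z - e))" using w2_eq by auto
  ultimately have "\<kappa> * w3 z = \<gamma> * w1 z + s * \<eta>1 z" using DERIV_unique by fastforce
  then show ?thesis using ccpos[of z] by (simp add: \<eta>1_eq Q0_def field_simps power2_eq_square)
qed

lemma w2top: "(w2 \<longlongrightarrow> 0) at_top"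
proof -
  have "((\<lambda>z. (\<gamma> * w z + s * (\<eta> z - e)) / \<kappa>) \<longlongrightarrow> (\<gamma> * 0 + s * (e - e)) / \<kappa>) at_top"
    by (intro tendsto_intros wtop \<eta>top) (use kne in auto)
  moreover have "(\<lambda>z. (\<gamma> * w z + s * (\<eta> z - e)) / \<kappa>) = w2" using w2_eq kne by (auto simp: field_simps)
  ultimately show ?thesis by simp
qed
lemma w2bot: "(w2 \<longlongrightarrow> 0) at_bot"
proof -
  have "((\<lambda>z. (\<gamma> * w z + s * (\<eta> z - e)) / \<kappa>) \<longlongrightarrow> (\<gamma> * 0 + s * (e - e)) / \<kappa>) at_bot"
    by (intro tendsto_intros wbot \<eta>bot) (use kne in auto)
  moreover have "(\<lambda>z. (\<gamma> * w z + s * (\<eta> z - e)) / \<kappa>) = w2" using w2_eq kne by (auto simp: field_simps)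
  ultimately show ?thesis by simp
qed
lemma w1top: "(w1 \<longlongrightarrow> 0) at_top" by (rule deriv_tendsto_top[OF dw dw1 wtop w2top])
lemma w1bot: "(w1 \<longlongrightarrow> 0) at_bot" by (rule deriv_tendsto_bot[OF dw dw1 wbot w2bot])

end

context sol begin

definition "Wf x = (x powr (-(\<nu>+2)) - e powr (-(\<nu>+2))) / s"
definition "Wf' x = -(\<nu>+2) * x powr (-(\<nu>+3)) / s"
definition "Ff x = \<gamma> * Wf x + s * (x - e)"
definition "Ff' x = \<gamma> * Wf' x + s"
definition "Hf x = (\<nu>+2)/(\<nu>+1) * x powr (-(\<nu>+1)) - e * x powr (-(\<nu>+2))"
definition "G x = \<gamma>/2 * (Wf x)\<^sup>2 + Hf x - Hf e"
definition "G' x = Wf' x * Ff x"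

lemma pw2: "x > 0 \<Longrightarrow> x powr (-(\<nu>+2)) = x powr (-(\<nu>+3)) * x"
proof -
  assume "x > 0"
  have "-(\<nu>+2) = -(\<nu>+3) + 1" by simp
  then have "x powr (-(\<nu>+2)) = x powr (-(\<nu>+3) + 1)" by (rule arg_cong)
  also have "\<dots> = x powr (-(\<nu>+3)) * x" using \<open>x>0\<close> by (simp only: powr_add powr_one less_imp_le)
  finally show ?thesis .
qed
lemma pw1: "x > 0 \<Longrightarrow> x powr (-(\<nu>+1)) = x powr (-(\<nu>+3)) * x * x"
proof -
  assume "x > 0"
  have "-(\<nu>+1) = -(\<nu>+2) + 1" by simp
  then have "x powr (-(\<nu>+1)) = x powr (-(\<nu>+2) + 1)" by (rule arg_cong)
  also have "\<dots> = x powr (-(\<nu>+2)) * x" using \<open>x>0\<close> by (simp only: powr_add powr_one less_imp_le)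
  finally show ?thesis using pw2 \<open>x>0\<close> by simp
qed

lemma w_Wf: "w z = Wf (\<eta> z)"
  using eq1[of z] s0 by (simp add: Wf_def field_simps)

lemma dWf: "x > 0 \<Longrightarrow> (Wf has_real_derivative Wf' x) (at x)"
proof -
  assume x: "x > 0"
  have "((\<lambda>x. (x powr (-(\<nu>+2)) - e powr (-(\<nu>+2))) / s) has_real_derivative
        ((-(\<nu>+2)) * x powr (-(\<nu>+2) - real 1) * 1 - 0) / s) (at x)"
    by (intro DERIV_cdivide DERIV_diff DERIV_fun_powr DERIV_ident DERIV_const x)
  moreover have ex: "-(\<nu>+2) - real 1 = -(\<nu>+3)" by simp
  ultimately show ?thesis unfolding Wf_def[abs_def] Wf'_def ex by simp
qed

lemma Wf'_ne: "x > 0 \<Longrightarrow> Wf' x \<noteq> 0"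
  using \<nu> s0 by (simp add: Wf'_def)

lemma dFf: "x > 0 \<Longrightarrow> (Ff has_real_derivative Ff' x) (at x)"
proof -
  assume x: "x > 0"
  have "((\<lambda>x. \<gamma> * Wf x + s * (x - e)) has_real_derivative \<gamma> * Wf' x + s * (1 - 0)) (at x)"
    by (intro DERIV_add DERIV_cmult dWf x DERIV_diff DERIV_ident DERIV_const)
  then show ?thesis unfolding Ff_def[abs_def] Ff'_def by simp
qed

lemma dG: "x > 0 \<Longrightarrow> (G has_real_derivative G' x) (at x)"
proof -
  assume x: "x > 0"
  have sq: "((\<lambda>x. (Wf x)\<^sup>2) has_real_derivative 2 * Wf x * Wf' x) (at x)"
    using DERIV_power[OF dWf[OF x], of 2] by (simp add: algebra_simps)
  have "((\<lambda>x. \<gamma>/2 * (Wf x)\<^sup>2 + ((\<nu>+2)/(\<nu>+1) * x powr (-(\<nu>+1)) - e * x powr (-(\<nu>+2))) - Hf e)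
     has_real_derivative \<gamma>/2 * (2 * Wf x * Wf' x) + ((\<nu>+2)/(\<nu>+1) * ((-(\<nu>+1)) * x powr (-(\<nu>+1) - real 1) * 1)
        - e * ((-(\<nu>+2)) * x powr (-(\<nu>+2) - real 1) * 1)) - 0) (at x)"
    by (intro DERIV_diff DERIV_add DERIV_cmult DERIV_fun_powr DERIV_ident DERIV_const x sq)
  moreover have ex: "-(\<nu>+1) - real 1 = -(\<nu>+2)" "-(\<nu>+2) - real 1 = -(\<nu>+3)" by simp_all
  moreover have "\<gamma>/2 * (2 * Wf x * Wf' x) + ((\<nu>+2)/(\<nu>+1) * ((-(\<nu>+1)) * x powr (-(\<nu>+2)) * 1)
        - e * ((-(\<nu>+2)) * x powr (-(\<nu>+3)) * 1)) - 0 = G' x"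
  proof -
    have n1: "\<nu> + 1 \<noteq> 0" using \<nu> by simp
    have h1: "(\<nu>+2)/(\<nu>+1) * ((-(\<nu>+1)) * x powr (-(\<nu>+2)) * 1) = -(\<nu>+2) * x powr (-(\<nu>+2))"
      using n1 by (simp add: field_simps)
    have h2: "\<gamma>/2 * (2 * Wf x * Wf' x) + (-(\<nu>+2) * (x powr (-(\<nu>+3)) * x)
        - e * ((-(\<nu>+2)) * x powr (-(\<nu>+3)) * 1)) - 0 = G' x"
      unfolding G'_def Ff_def Wf'_def using s0 by (simp add: field_simps)
    show ?thesis unfolding h1 using h2 pw2[OF x] by simp
  qed
  ultimately show ?thesis unfolding G_def[abs_def] Hf_def ex by simp
qed

end

lemma rolle_pos:
  fixes f f' :: "real \<Rightarrow> real"
  assumes "0 < a" "a < b" "f a = f b" "\<And>x. x > 0 \<Longrightarrow> (f has_real_derivative f' x) (at x)"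
  shows "\<exists>t. a < t \<and> t < b \<and> f' t = 0"
proof -
  have "continuous_on {a..b} f"
  proof (intro continuous_at_imp_continuous_on ballI)
    fix x assume "x \<in> {a..b}"
    then have "x > 0" using assms by auto
    then show "isCont f x" using assms(4) DERIV_isCont by blast
  qed
  moreover have "f differentiable (at x)" if "a < x" "x < b" for x
  proof -
    have "x > 0" using assms that by auto
    then show ?thesis using assms(4) real_differentiable_def by blast
  qed
  ultimately obtain t where "a < t" "t < b" "(f has_real_derivative 0) (at t)"
    using Rolle[of a b f] assms by blast
  moreover have "(f has_real_derivative f' t) (at t)" using assms \<open>a < t\<close> by simp
  ultimately show ?thesis using DERIV_unique by blast
qed

context sol begin

lemma Ff'_inj: "0 < x \<Longrightarrow> x < y \<Longrightarrow> Ff' x \<noteq> Ff' y"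
proof -
  assume xy: "0 < x" "x < y"
  have "y powr (-(\<nu>+3)) < x powr (-(\<nu>+3))" using xy \<nu> by (intro powr_less_mono2_neg) auto
  moreover have "\<gamma> * (\<nu>+2) / s \<noteq> 0" using \<gamma>pos \<nu> s0 by simp
  moreover have "Ff' x - Ff' y = -(\<gamma> * (\<nu>+2) / s) * (x powr (-(\<nu>+3)) - y powr (-(\<nu>+3)))"
    unfolding Ff'_def Wf'_def using s0 by (simp add: field_simps)
  ultimately show ?thesis by auto
qed

lemma Ff_3: "0 < x \<Longrightarrow> x < y \<Longrightarrow> y < z \<Longrightarrow> Ff x = 0 \<Longrightarrow> Ff y = 0 \<Longrightarrow> Ff z = 0 \<Longrightarrow> False"
proof -
  assume h: "0 < x" "x < y" "y < z" "Ff x = 0" "Ff y = 0" "Ff z = 0"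
  obtain t1 where t1: "x < t1" "t1 < y" "Ff' t1 = 0" using rolle_pos[of x y Ff Ff'] h dFf by auto
  obtain t2 where t2: "y < t2" "t2 < z" "Ff' t2 = 0" using rolle_pos[of y z Ff Ff'] h dFf by auto
  show False using Ff'_inj[of t1 t2] t1 t2 h by auto
qed

lemma Wf_e: "Wf e = 0" by (simp add: Wf_def)
lemma Ff_e: "Ff e = 0" by (simp add: Ff_def Wf_e)
lemma G_e: "G e = 0" by (simp add: G_def Wf_e)

lemma G_root_Ff: "t > 0 \<Longrightarrow> G' t = 0 \<Longrightarrow> Ff t = 0"
  using Wf'_ne[of t] by (simp add: G'_def)

lemma G_3: "0 < p \<Longrightarrow> p < q \<Longrightarrow> q < r \<Longrightarrow> G p = 0 \<Longrightarrow> G q = 0 \<Longrightarrow> G r = 0 \<Longrightarrow> e = p \<or> e = q \<or> e = r \<Longrightarrow> False"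
proof -
  assume h: "0 < p" "p < q" "q < r" "G p = 0" "G q = 0" "G r = 0" "e = p \<or> e = q \<or> e = r"
  obtain t1 where t1: "p < t1" "t1 < q" "G' t1 = 0" using rolle_pos[of p q G G'] h dG by auto
  obtain t2 where t2: "q < t2" "t2 < r" "G' t2 = 0" using rolle_pos[of q r G G'] h dG by auto
  have f1: "Ff t1 = 0" using G_root_Ff t1 h by auto
  have f2: "Ff t2 = 0" using G_root_Ff t2 h by auto
  from h(7) show False
  proof (elim disjE)
    assume "e = p" then show False using Ff_3[of p t1 t2] f1 f2 t1 t2 h Ff_e by auto
  next
    assume "e = q" then show False using Ff_3[of t1 q t2] f1 f2 t1 t2 h Ff_e by auto
  next
    assume "e = r" then show False using Ff_3[of t1 t2 r] f1 f2 t1 t2 h Ff_e by auto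
  qed
qed

lemma G_unique: "0 < r1 \<Longrightarrow> 0 < r2 \<Longrightarrow> r1 \<noteq> e \<Longrightarrow> r2 \<noteq> e \<Longrightarrow> G r1 = 0 \<Longrightarrow> G r2 = 0 \<Longrightarrow> r1 = r2"
proof -
  have main: "False" if "0 < r1" "r1 < r2" "r1 \<noteq> e" "r2 \<noteq> e" "G r1 = 0" "G r2 = 0" for r1 r2
  proof -
    have "e < r1 \<or> (r1 < e \<and> e < r2) \<or> r2 < e" using that by auto
    then show False
    proof (elim disjE)
      assume 1: "e < r1" from 1 show ?thesis using G_3[of e r1 r2] that G_e e by auto
    next
      assume 2: "r1 < e \<and> e < r2" from 2 show ?thesis using G_3[of r1 e r2] that G_e by auto
    next
      assume 3: "r2 < e" from 3 show ?thesis using G_3[of r1 r2 e] that G_e by auto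
    qed
  qed
  
  assume h: "0 < r1" "0 < r2" "r1 \<noteq> e" "r2 \<noteq> e" "G r1 = 0" "G r2 = 0"
  show "r1 = r2"
  proof (cases r1 r2 rule: linorder_cases)
    case less then show ?thesis using main[of r1 r2] h by auto
  next
    case greater then show ?thesis using main[of r2 r1] h by auto
  qed simp
qed

lemma FG_common: "0 < c \<Longrightarrow> c \<noteq> e \<Longrightarrow> Ff c = 0 \<Longrightarrow> G c = 0 \<Longrightarrow> False"
proof -
  assume h: "0 < c" "c \<noteq> e" "Ff c = 0" "G c = 0"
  show False
  proof (cases "c < e")
    case True
    obtain t where t: "c < t" "t < e" "G' t = 0" using rolle_pos[of c e G G'] h dG G_e True by auto
    then have "Ff t = 0" using G_root_Ff h by auto
    then show False using Ff_3[of c t e] t h Ff_e by auto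
  next
    case False
    then have ec: "e < c" using h by auto
    obtain t where t: "e < t" "t < c" "G' t = 0" using rolle_pos[of e c G G'] h dG G_e ec e by auto
    then have "Ff t = 0" using G_root_Ff e by auto
    then show False using Ff_3[of e t c] t h Ff_e e by auto
  qed
qed

lemma w2_Ff: "\<kappa> * w2 z = Ff (\<eta> z)"
  using w2_eq[of z] by (simp add: Ff_def w_Wf)

lemma contG: "x > 0 \<Longrightarrow> isCont G x" using dG DERIV_isCont by blast

lemma energy: "\<kappa> / 2 * (w1 z)\<^sup>2 = G (\<eta> z)"
proof -
  define E where "E = (\<lambda>z. \<kappa> / 2 * (w1 z)\<^sup>2 - G (\<eta> z))"
  have dE: "(E has_real_derivative 0) (at z)" for z
  proof -
    have sq: "((\<lambda>z. (w1 z)\<^sup>2) has_real_derivative 2 * w1 z * w2 z) (at z)"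
      using DERIV_power[OF dw1[of z], of 2] by (simp add: algebra_simps)
    have "(E has_real_derivative \<kappa> / 2 * (2 * w1 z * w2 z) - G' (\<eta> z) * \<eta>1 z) (at z)"
      unfolding E_def by (intro DERIV_diff DERIV_cmult sq DERIV_chain2[OF dG d\<eta>] \<eta>pos)
    moreover have "\<kappa> / 2 * (2 * w1 z * w2 z) - G' (\<eta> z) * \<eta>1 z = 0"
    proof -
      have wf': "Wf' (\<eta> z) = - cc z / s" by (simp add: Wf'_def cc_def algebra_simps)
      have "Wf' (\<eta> z) * \<eta>1 z = w1 z"
        unfolding \<eta>1_eq wf' using s0 ccpos[of z] by (simp add: field_simps)
      moreover have "\<kappa> / 2 * (2 * w1 z * w2 z) = w1 z * Ff (\<eta> z)" using w2_Ff[of z] by (simp add: algebra_simps)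
      ultimately show ?thesis unfolding G'_def by (metis (no_types, lifting) diff_self mult.assoc mult.commute)
    qed
    ultimately show ?thesis by simp
  qed
  have const: "E z = E y" for y using DERIV_isconst_all[of E z y] dE by blast
  have "(E \<longlongrightarrow> \<kappa> / 2 * 0\<^sup>2 - G e) at_top"
    unfolding E_def by (intro tendsto_intros w1top isCont_tendsto_compose[OF contG[OF e] \<eta>top])
  then have "(E \<longlongrightarrow> 0) at_top" by (simp add: G_e)
  moreover have "(E \<longlongrightarrow> E z) at_top" by (rule tendsto_eventually, rule always_eventually) (metis const)
  ultimately have "E z = 0" using tendsto_unique[of at_top E] by fastforce
  then show ?thesis by (simp add: E_def)
qed

end

lemma eventually_box:
  fixes f :: "real \<Rightarrow> real"
  assumes "(f \<longlongrightarrow> c) at_top" "(f \<longlongrightarrow> c) at_bot" "\<epsilon> > 0"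
  shows "\<exists>N1 N2. N2 \<le> N1 \<and> (\<forall>z. (z \<ge> N1 \<or> z \<le> N2) \<longrightarrow> \<bar>f z - c\<bar> < \<epsilon>)"
proof -
  obtain N1 where N1: "\<And>z. z \<ge> N1 \<Longrightarrow> \<bar>f z - c\<bar> < \<epsilon>"
    using tendstoD[OF assms(1) assms(3)] by (auto simp: eventually_at_top_linorder dist_real_def)
  obtain N2 where N2: "\<And>z. z \<le> N2 \<Longrightarrow> \<bar>f z - c\<bar> < \<epsilon>"
    using tendstoD[OF assms(2) assms(3)] by (auto simp: eventually_at_bot_linorder dist_real_def)
  show ?thesis using N1 N2 by (intro exI[of _ "max N1 N2"] exI[of _ "min N1 N2"]) auto
qed

lemma range_bounds:
  fixes f :: "real \<Rightarrow> real"
  assumes cont: "\<And>z. isCont f z" and lt: "(f \<longlongrightarrow> c) at_top" and lb: "(f \<longlongrightarrow> c) at_bot"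
    and c: "c > 0" and pos: "\<And>z. f z > 0"
  shows "\<exists>m M. 0 < m \<and> m \<le> c \<and> c \<le> M \<and> (\<forall>z. m \<le> f z \<and> f z \<le> M)"
proof -
  obtain N1 N2 where N: "N2 \<le> N1" "\<And>z. (z \<ge> N1 \<or> z \<le> N2) \<Longrightarrow> \<bar>f z - c\<bar> < c/2"
    using eventually_box[OF lt lb, of "c/2"] c by auto
  have co: "continuous_on {N2..N1} f" by (intro continuous_at_imp_continuous_on ballI cont)
  obtain x1 where x1: "x1 \<in> {N2..N1}" "\<And>y. y \<in> {N2..N1} \<Longrightarrow> f x1 \<le> f y"
    using continuous_attains_inf[OF compact_Icc _ co] N(1) by auto
  obtain x2 where x2: "x2 \<in> {N2..N1}" "\<And>y. y \<in> {N2..N1} \<Longrightarrow> f y \<le> f x2"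
    using continuous_attains_sup[OF compact_Icc _ co] N(1) by auto
  define m where "m = min (c/2) (f x1)"
  define M where "M = max (3*c/2) (f x2)"
  have "m \<le> f z \<and> f z \<le> M" for z
  proof (cases "z \<ge> N1 \<or> z \<le> N2")
    case True then have "\<bar>f z - c\<bar> < c/2" using N(2)[of z] by auto
    then have "c/2 < f z" "f z < 3*c/2" unfolding abs_less_iff by linarith+
    then show ?thesis unfolding m_def M_def by (simp add: min_le_iff_disj le_max_iff_disj)
  next
    case False then have "z \<in> {N2..N1}" by auto
    then have "f x1 \<le> f z" "f z \<le> f x2" using x1(2) x2(2) by auto
    then show ?thesis unfolding m_def M_def by (simp add: min_le_iff_disj le_max_iff_disj)
  qed
  moreover have "0 < m" using c pos[of x1] by (simp add: m_def)
  ultimately show ?thesis using c by (intro exI[of _ m] exI[of _ M]) (auto simp: m_def M_def)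
qed

lemma attains_max:
  fixes f :: "real \<Rightarrow> real"
  assumes cont: "\<And>z. isCont f z" and lt: "(f \<longlongrightarrow> 0) at_top" and lb: "(f \<longlongrightarrow> 0) at_bot"
    and p: "f p > 0"
  shows "\<exists>z. \<forall>y. f y \<le> f z"
proof -
  obtain N1 N2 where N: "N2 \<le> N1" "\<And>z. (z \<ge> N1 \<or> z \<le> N2) \<Longrightarrow> \<bar>f z - 0\<bar> < f p"
    using eventually_box[OF lt lb, of "f p"] p by auto
  have pin: "p \<in> {N2..N1}" using N(2)[of p] by force
  have co: "continuous_on {N2..N1} f" by (intro continuous_at_imp_continuous_on ballI cont)
  obtain x2 where x2: "x2 \<in> {N2..N1}" "\<And>y. y \<in> {N2..N1} \<Longrightarrow> f y \<le> f x2"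
    using continuous_attains_sup[OF compact_Icc _ co] N(1) by auto
  have "f y \<le> f x2" for y
  proof (cases "y \<ge> N1 \<or> y \<le> N2")
    case True then have "f y < f p" using N(2)[of y] by auto
    then show ?thesis using x2(2)[OF pin] by simp
  next
    case False then show ?thesis using x2 by auto
  qed
  then show ?thesis by blast
qed

lemma mvt_between:
  fixes f f' :: "real \<Rightarrow> real"
  assumes "\<And>y. min x c \<le> y \<Longrightarrow> y \<le> max x c \<Longrightarrow> (f has_real_derivative f' y) (at y)"
  shows "\<exists>\<xi>. min x c \<le> \<xi> \<and> \<xi> \<le> max x c \<and> f x - f c = (x - c) * f' \<xi>"
proof (cases x c rule: linorder_cases)
  case less
  then obtain z where "x < z" "z < c" "f c - f x = (c - x) * f' z" using MVT2[of x c f f'] assms by auto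
  then show ?thesis using less by (intro exI[of _ z]) (auto simp: algebra_simps)
next
  case equal then show ?thesis by (intro exI[of _ c]) auto
next
  case greater
  then obtain z where "c < z" "z < x" "f x - f c = (x - c) * f' z" using MVT2[of c x f f'] assms by auto
  then show ?thesis using greater by (intro exI[of _ z]) auto
qed

lemma bound_compact:
  fixes g :: "real \<Rightarrow> real"
  assumes "continuous_on {m..M} g"
  shows "\<exists>B. \<forall>x\<in>{m..M}. \<bar>g x\<bar> \<le> B"
proof -
  have "bounded (g ` {m..M})" by (intro compact_imp_bounded compact_continuous_image assms compact_Icc)
  then show ?thesis unfolding bounded_real by auto
qed


context sol begin

lemma \<eta>_range: "\<exists>m M. 0 < m \<and> m \<le> e \<and> e \<le> M \<and> (\<forall>z. m \<le> \<eta> z \<and> \<eta> z \<le> M)"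
  by (rule range_bounds[OF cont_\<eta> \<eta>top \<eta>bot e \<eta>pos])

lemma phi_bound: "\<exists>K. \<forall>z. (w1 z)\<^sup>2 \<le> K * (w z)\<^sup>2"
proof -
  obtain m M where mM: "0 < m" "m \<le> e" "e \<le> M" "\<And>z. m \<le> \<eta> z \<and> \<eta> z \<le> M" using \<eta>_range by blast
  have cWf': "continuous_on {m..M} Wf'" unfolding Wf'_def using mM(1) s0
    by (intro continuous_intros) auto
  have cFf': "continuous_on {m..M} Ff'" unfolding Ff'_def Wf'_def using mM(1) s0
    by (intro continuous_intros) auto
  have ne: "{m..M} \<noteq> {}" using mM by auto
  obtain x0 where x0: "x0 \<in> {m..M}" "\<And>y. y \<in> {m..M} \<Longrightarrow> \<bar>Wf' x0\<bar> \<le> \<bar>Wf' y\<bar>"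
    using continuous_attains_inf[OF compact_Icc ne continuous_on_rabs[OF cWf']] by auto
  define lw where "lw = \<bar>Wf' x0\<bar>"
  have lw: "lw > 0" using Wf'_ne[of x0] x0(1) mM(1) by (auto simp: lw_def)
  obtain B1 where B1: "\<And>x. x \<in> {m..M} \<Longrightarrow> \<bar>Wf' x\<bar> \<le> B1" using bound_compact[OF cWf'] by blast
  obtain B2 where B2: "\<And>x. x \<in> {m..M} \<Longrightarrow> \<bar>Ff' x\<bar> \<le> B2" using bound_compact[OF cFf'] by blast
  have B1p: "B1 \<ge> 0" using B1[of m] mM by force
  have B2p: "B2 \<ge> 0" using B2[of m] mM by force
  have inI: "y \<in> {m..M}" if "x \<in> {m..M}" "min x e \<le> y" "y \<le> max x e" for x y
    using that mM by auto
  have posI: "y > 0" if "x \<in> {m..M}" "min x e \<le> y" "y \<le> max x e" for x y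
    using inI[OF that] mM(1) by auto
  have Wlow: "lw * \<bar>x - e\<bar> \<le> \<bar>Wf x\<bar>" if x: "x \<in> {m..M}" for x
  proof -
    obtain \<xi> where \<xi>: "min x e \<le> \<xi>" "\<xi> \<le> max x e" "Wf x - Wf e = (x - e) * Wf' \<xi>"
      using mvt_between[of x e Wf Wf'] dWf posI[OF x] by blast
    have "\<xi> \<in> {m..M}" using inI[OF x \<xi>(1,2)] .
    then have "lw \<le> \<bar>Wf' \<xi>\<bar>" using x0 by (simp add: lw_def)
    then have "lw * \<bar>x - e\<bar> \<le> \<bar>Wf' \<xi>\<bar> * \<bar>x - e\<bar>" by (simp add: mult_right_mono)
    also have "\<dots> = \<bar>Wf x\<bar>" using \<xi>(3) by (simp add: Wf_e abs_mult)
    finally show ?thesis .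
  qed
  have Gup: "\<bar>G x\<bar> \<le> B1 * B2 * (x - e)\<^sup>2" if x: "x \<in> {m..M}" for x
  proof -
    obtain \<xi> where \<xi>: "min x e \<le> \<xi>" "\<xi> \<le> max x e" "G x - G e = (x - e) * G' \<xi>"
      using mvt_between[of x e G G'] dG posI[OF x] by blast
    have \<xi>I: "\<xi> \<in> {m..M}" using inI[OF x \<xi>(1,2)] .
    have \<xi>I2: "\<xi> \<in> {m..M}" "e \<in> {m..M}" using \<xi>I mM by auto
    obtain \<zeta> where \<zeta>: "min \<xi> e \<le> \<zeta>" "\<zeta> \<le> max \<xi> e" "Ff \<xi> - Ff e = (\<xi> - e) * Ff' \<zeta>"
      using mvt_between[of \<xi> e Ff Ff'] dFf posI[OF \<xi>I] by blast
    have \<zeta>I: "\<zeta> \<in> {m..M}" using inI[OF \<xi>I \<zeta>(1,2)] .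
    have "\<bar>G x\<bar> = \<bar>x - e\<bar> * \<bar>Wf' \<xi>\<bar> * (\<bar>\<xi> - e\<bar> * \<bar>Ff' \<zeta>\<bar>)"
      using \<xi>(3) \<zeta>(3) by (simp add: G_e Ff_e G'_def abs_mult)
    also have "\<dots> \<le> \<bar>x - e\<bar> * B1 * (\<bar>x - e\<bar> * B2)"
    proof (intro mult_mono mult_left_mono)
      show "\<bar>Wf' \<xi>\<bar> \<le> B1" using B1[OF \<xi>I] .
      show "\<bar>Ff' \<zeta>\<bar> \<le> B2" using B2[OF \<zeta>I] .
      show "\<bar>\<xi> - e\<bar> \<le> \<bar>x - e\<bar>" using \<xi>(1,2) by (auto simp: min_def max_def split: if_splits)
    qed (use B1p B2p in auto)
    also have "\<dots> = B1 * B2 * (x - e)\<^sup>2" by (simp add: power2_eq_square abs_mult_self_eq algebra_simps)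
    finally show ?thesis .
  qed
  define K where "K = 2 / \<kappa> * (B1 * B2) / lw\<^sup>2"
  have "(w1 z)\<^sup>2 \<le> K * (w z)\<^sup>2" for z
  proof -
    have x: "\<eta> z \<in> {m..M}" using mM(4)[of z] by auto
    have "(w1 z)\<^sup>2 = 2 / \<kappa> * G (\<eta> z)" using energy[of z] \<kappa> by (simp add: field_simps)
    also have "\<dots> \<le> 2 / \<kappa> * (B1 * B2 * (\<eta> z - e)\<^sup>2)"
      using Gup[OF x] \<kappa> by (intro mult_left_mono) auto
    also have "(\<eta> z - e)\<^sup>2 \<le> (w z)\<^sup>2 / lw\<^sup>2"
    proof -
      have "(lw * \<bar>\<eta> z - e\<bar>)\<^sup>2 \<le> (\<bar>Wf (\<eta> z)\<bar>)\<^sup>2"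
        using Wlow[OF x] lw by (intro power_mono) auto
      then show ?thesis using lw by (simp add: w_Wf field_simps power_mult_distrib)
    qed
    then have "2 / \<kappa> * (B1 * B2 * (\<eta> z - e)\<^sup>2) \<le> 2 / \<kappa> * (B1 * B2 * ((w z)\<^sup>2 / lw\<^sup>2))"
      using \<kappa> B1p B2p by (intro mult_left_mono) auto
    also have "\<dots> = K * (w z)\<^sup>2" by (simp add: K_def field_simps)
    finally show ?thesis .
  qed
  then show ?thesis by blast
qed

end

lemma powr_eq_imp: "0 < x \<Longrightarrow> 0 < y \<Longrightarrow> r \<noteq> 0 \<Longrightarrow> x powr r = y powr r \<Longrightarrow> x = (y::real)"
proof -
  assume h: "0 < x" "0 < y" "r \<noteq> 0" "x powr r = y powr r"
  have "(x powr r) powr (1/r) = x powr (r * (1/r))" by (rule powr_powr)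
  then have "x = (x powr r) powr (1/r)" using h by simp
  also have "\<dots> = (y powr r) powr (1/r)" using h by simp
  also have "(y powr r) powr (1/r) = y powr (r * (1/r))" by (rule powr_powr)
  also have "\<dots> = y" using h by simp
  finally show ?thesis .
qed

lemma sign_right:
  fixes g :: "real \<Rightarrow> real"
  assumes cont: "\<And>x. isCont g x" and nz: "\<And>x. a < x \<Longrightarrow> g x \<noteq> 0"
  shows "(\<forall>x>a. g x > 0) \<or> (\<forall>x>a. g x < 0)"
proof (rule ccontr)
  assume "\<not> ?thesis"
  then obtain x y where xy: "a < x" "g x < 0" "a < y" "g y > 0" using nz by (metis linorder_neqE_linordered_idom)
  show False
  proof (cases "x \<le> y")
    case True
    then obtain c where "c \<ge> x" "c \<le> y" "g c = 0" using IVT[of g x 0 y] xy cont by auto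
    then show False using nz[of c] xy by auto
  next
    case False
    then obtain c where "c \<ge> y" "c \<le> x" "g c = 0" using IVT2[of g x 0 y] xy cont by auto
    then show False using nz[of c] xy by auto
  qed
qed

lemma sign_left:
  fixes g :: "real \<Rightarrow> real"
  assumes cont: "\<And>x. isCont g x" and nz: "\<And>x. x < a \<Longrightarrow> g x \<noteq> 0"
  shows "(\<forall>x<a. g x > 0) \<or> (\<forall>x<a. g x < 0)"
proof (rule ccontr)
  assume "\<not> ?thesis"
  then obtain x y where xy: "x < a" "g x < 0" "y < a" "g y > 0" using nz by (metis linorder_neqE_linordered_idom)
  show False
  proof (cases "x \<le> y")
    case True
    then obtain c where "c \<ge> x" "c \<le> y" "g c = 0" using IVT[of g x 0 y] xy cont by auto
    then show False using nz[of c] xy by auto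
  next
    case False
    then obtain c where "c \<ge> y" "c \<le> x" "g c = 0" using IVT2[of g x 0 y] xy cont by auto
    then show False using nz[of c] xy by auto
  qed
qed

context sol begin

lemma w_somewhere: "\<exists>z. w z \<noteq> 0"
proof (rule ccontr)
  assume "\<not> ?thesis"
  then have w0: "w z = 0" for z by auto
  have "\<eta> z = e" for z
  proof -
    have "\<eta> z powr (-(\<nu>+2)) = e powr (-(\<nu>+2))" using eq1[of z] w0[of z] by simp
    then show ?thesis using powr_eq_imp[of "\<eta> z" e "-(\<nu>+2)"] \<eta>pos[of z] e \<nu> by auto
  qed
  then show False using nonconst w0 by auto
qed

lemma dwsq: "((\<lambda>z. (w z)\<^sup>2) has_real_derivative 2 * w z * w1 z) (at z)"
  using DERIV_power[OF dw[of z], of 2] by (simp add: algebra_simps)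

lemma w_nonzero: "w z \<noteq> 0"
proof -
  obtain z0 where z0: "w z0 \<noteq> 0" using w_somewhere by blast
  obtain K where K: "\<And>z. (w1 z)\<^sup>2 \<le> K * (w z)\<^sup>2" using phi_bound by blast
  define C where "C = 1 + \<bar>K\<bar>"
  have key: "\<bar>2 * w z * w1 z\<bar> \<le> C * (w z)\<^sup>2" for z
  proof -
    have "\<bar>2 * w z * w1 z\<bar> \<le> (w z)\<^sup>2 + (w1 z)\<^sup>2"
      using sum_squares_bound[of "w z" "w1 z"] sum_squares_bound[of "-w z" "w1 z"]
      by (simp add: abs_if power2_eq_square algebra_simps)
    also have "\<dots> \<le> (w z)\<^sup>2 + \<bar>K\<bar> * (w z)\<^sup>2" using K[of z] abs_ge_self[of K]
      by (smt (verit) mult_right_mono zero_le_power2)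
    finally show ?thesis by (simp add: C_def algebra_simps)
  qed
  show ?thesis
  proof (cases "z0 \<le> z")
    case True
    define h where "h = (\<lambda>z. (w z)\<^sup>2 * exp (C * z))"
    have dh: "(h has_real_derivative (2 * w y * w1 y) * exp (C * y) + (w y)\<^sup>2 * (exp (C * y) * C)) (at y)" for y
      unfolding h_def using DERIV_mult[OF dwsq DERIV_fun_exp[OF DERIV_cmult[OF DERIV_ident]], of "C" y] by (simp add: algebra_simps)
    have "h z0 \<le> h z"
    proof (rule DERIV_nonneg_imp_nondecreasing[OF True])
      fix y show "\<exists>l. (h has_real_derivative l) (at y) \<and> 0 \<le> l"
      proof (intro exI conjI)
        show "(h has_real_derivative (2 * w y * w1 y) * exp (C * y) + (w y)\<^sup>2 * (exp (C * y) * C)) (at y)" by (rule dh)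
        have "0 \<le> (2 * w y * w1 y + C * (w y)\<^sup>2)" using key[of y] by linarith
        then have "0 \<le> (2 * w y * w1 y + C * (w y)\<^sup>2) * exp (C * y)" by simp
        then show "0 \<le> (2 * w y * w1 y) * exp (C * y) + (w y)\<^sup>2 * (exp (C * y) * C)" by (simp add: algebra_simps)
      qed
    qed
    moreover have "h z0 > 0" using z0 by (simp add: h_def)
    ultimately have "h z > 0" by linarith
    then show ?thesis by (auto simp: h_def)
  next
    case False
    then have zz: "z \<le> z0" by simp
    define h where "h = (\<lambda>z. (w z)\<^sup>2 * exp (- C * z))"
    have dh: "(h has_real_derivative (2 * w y * w1 y) * exp (- C * y) + (w y)\<^sup>2 * (exp (- C * y) * - C)) (at y)" for y
      unfolding h_def using DERIV_mult[OF dwsq DERIV_fun_exp[OF DERIV_cmult[OF DERIV_ident]], of "- C" y] by (simp add: algebra_simps)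
    have "h z0 \<le> h z"
    proof (rule DERIV_nonpos_imp_nonincreasing[OF zz])
      fix y show "\<exists>l. (h has_real_derivative l) (at y) \<and> l \<le> 0"
      proof (intro exI conjI)
        show "(h has_real_derivative (2 * w y * w1 y) * exp (- C * y) + (w y)\<^sup>2 * (exp (- C * y) * - C)) (at y)" by (rule dh)
        have "(2 * w y * w1 y - C * (w y)\<^sup>2) \<le> 0" using key[of y] by linarith
        then have "(2 * w y * w1 y - C * (w y)\<^sup>2) * exp (- C * y) \<le> 0" by (simp add: mult_nonpos_nonneg)
        then show "(2 * w y * w1 y) * exp (- C * y) + (w y)\<^sup>2 * (exp (- C * y) * - C) \<le> 0" by (simp add: algebra_simps)
      qed
    qed
    moreover have "h z0 > 0" using z0 by (simp add: h_def)
    ultimately have "h z > 0" by linarith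
    then show ?thesis by (auto simp: h_def)
  qed
qed

lemma \<eta>_ne_e: "\<eta> z \<noteq> e"
proof
  assume "\<eta> z = e"
  then have "w z = 0" using w_Wf[of z] Wf_e by simp
  with w_nonzero show False by blast
qed

end

context sol begin

lemma wsq_cont: "isCont (\<lambda>z. (w z)\<^sup>2) z" using dwsq DERIV_isCont by blast

lemma zstar_exists: "\<exists>zs. (\<forall>y. (w y)\<^sup>2 \<le> (w zs)\<^sup>2) \<and> w1 zs = 0"
proof -
  have t: "((\<lambda>z. (w z)\<^sup>2) \<longlongrightarrow> 0) at_top" using tendsto_power[OF wtop, of 2] by simp
  have b: "((\<lambda>z. (w z)\<^sup>2) \<longlongrightarrow> 0) at_bot" using tendsto_power[OF wbot, of 2] by simp
  have p: "(w 0)\<^sup>2 > 0" using w_nonzero[of 0] by simp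
  obtain zs where zs: "\<And>y. (w y)\<^sup>2 \<le> (w zs)\<^sup>2" using attains_max[OF wsq_cont t b p] by blast
  have "2 * w zs * w1 zs = 0" using DERIV_local_max[OF dwsq[of zs], of 1] zs by auto
  then have "w1 zs = 0" using w_nonzero[of zs] by simp
  then show ?thesis using zs by blast
qed

lemma phi_zero_eta: "w1 z = 0 \<Longrightarrow> w1 z' = 0 \<Longrightarrow> \<eta> z = \<eta> z'"
proof -
  assume h: "w1 z = 0" "w1 z' = 0"
  have "G (\<eta> z) = 0" "G (\<eta> z') = 0" using energy[of z] energy[of z'] h by auto
  then show ?thesis using G_unique \<eta>pos \<eta>_ne_e by blast
qed

lemma phi_mid_zero: "lo < y \<Longrightarrow> y < hi \<Longrightarrow> (\<And>y'. lo \<le> y' \<Longrightarrow> y' \<le> hi \<Longrightarrow> (w y')\<^sup>2 = c) \<Longrightarrow> w1 y = 0"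
proof -
  assume h: "lo < y" "y < hi" "\<And>y'. lo \<le> y' \<Longrightarrow> y' \<le> hi \<Longrightarrow> (w y')\<^sup>2 = c"
  define d where "d = min (y - lo) (hi - y)"
  have d: "d > 0" using h by (simp add: d_def)
  have "\<forall>y'. \<bar>y - y'\<bar> < d \<longrightarrow> (w y)\<^sup>2 = (w y')\<^sup>2"
    using h by (auto simp: d_def abs_less_iff)
  then have "2 * w y * w1 y = 0" using DERIV_local_const[OF dwsq d] by blast
  then show ?thesis using w_nonzero[of y] by simp
qed

lemma phi_unique_zero:
  assumes zs: "\<And>y. (w y)\<^sup>2 \<le> (w zs)\<^sup>2" "w1 zs = 0" and z1: "w1 z1 = 0"
  shows "z1 = zs"
proof (rule ccontr)
  assume ne: "z1 \<noteq> zs"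
  define lo where "lo = min z1 zs"
  define hi where "hi = max z1 zs"
  have lh: "lo < hi" using ne by (simp add: lo_def hi_def)
  define M0 where "M0 = (w zs)\<^sup>2"
  have wz1: "(w z1)\<^sup>2 = M0" using phi_zero_eta[OF z1 zs(2)] by (simp add: M0_def w_Wf)
  have ends: "(w lo)\<^sup>2 = M0" "(w hi)\<^sup>2 = M0" using wz1 by (auto simp: lo_def hi_def M0_def min_def max_def)
  have co: "continuous_on {lo..hi} (\<lambda>z. (w z)\<^sup>2)" by (intro continuous_at_imp_continuous_on ballI wsq_cont)
  obtain z2 where z2: "z2 \<in> {lo..hi}" "\<And>y. y \<in> {lo..hi} \<Longrightarrow> (w z2)\<^sup>2 \<le> (w y)\<^sup>2"
    using continuous_attains_inf[OF compact_Icc _ co] lh by auto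
  show False
  proof (cases "(w z2)\<^sup>2 < M0")
    case True
    then have in2: "lo < z2" "z2 < hi" using z2(1) ends by (auto simp: le_less)
    define d where "d = min (z2 - lo) (hi - z2)"
    have d: "d > 0" using in2 by (simp add: d_def)
    have "\<forall>y. \<bar>z2 - y\<bar> < d \<longrightarrow> (w z2)\<^sup>2 \<le> (w y)\<^sup>2"
      using z2(2) by (auto simp: d_def abs_less_iff)
    then have "2 * w z2 * w1 z2 = 0" using DERIV_local_min[OF dwsq d] by blast
    then have "w1 z2 = 0" using w_nonzero[of z2] by simp
    then have "(w z2)\<^sup>2 = M0" using phi_zero_eta[OF _ zs(2)] by (simp add: M0_def w_Wf)
    with True show False by simp
  next
    case False
    have const: "(w y)\<^sup>2 = M0" if "lo \<le> y" "y \<le> hi" for y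
      using z2(2)[of y] False zs(1)[of y] that by (simp add: M0_def)
    define zm where "zm = (lo + hi) / 2"
    have zm: "lo < zm" "zm < hi" using lh by (simp_all add: zm_def)
    define d where "d = (hi - lo) / 2"
    have d: "d > 0" using lh by (simp add: d_def)
    have "\<forall>y. \<bar>zm - y\<bar> < d \<longrightarrow> w1 zm = w1 y"
    proof (intro allI impI)
      fix y assume "\<bar>zm - y\<bar> < d"
      then have "-d < zm - y" "zm - y < d" unfolding abs_less_iff by linarith+
      then have "lo < y" "y < hi" unfolding zm_def d_def by (auto simp: field_simps)
      then show "w1 zm = w1 y" using phi_mid_zero[OF zm] phi_mid_zero const by metis
    qed
    then have "w2 zm = 0" using DERIV_local_const[OF dw1 d] by blast
    then have "Ff (\<eta> zm) = 0" using w2_Ff[of zm] by simp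
    moreover have "G (\<eta> zm) = 0" using energy[of zm] phi_mid_zero[OF zm const] by simp
    ultimately show False using FG_common \<eta>pos \<eta>_ne_e by blast
  qed
qed

lemma phi_structure: "\<exists>zs. ((\<forall>x>zs. w1 x > 0) \<or> (\<forall>x>zs. w1 x < 0)) \<and> ((\<forall>x<zs. w1 x > 0) \<or> (\<forall>x<zs. w1 x < 0))"
proof -
  obtain zs where zs: "\<And>y. (w y)\<^sup>2 \<le> (w zs)\<^sup>2" "w1 zs = 0" using zstar_exists by blast
  have nz: "w1 x \<noteq> 0" if "x \<noteq> zs" for x using phi_unique_zero[OF zs] that by blast
  show ?thesis
    using sign_right[OF cont_w1, of zs] sign_left[OF cont_w1, of zs] nz by (intro exI[of _ zs]) force
qed

end

lemma hits_side:
  fixes u u' u'' v v' v'' p r :: "real \<Rightarrow> real" and a b :: ereal and x0 :: real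
  assumes du: "\<And>z. (u has_real_derivative u' z) (at z)" "\<And>z. (u' has_real_derivative u'' z) (at z)"
    and dv: "\<And>z. (v has_real_derivative v' z) (at z)" "\<And>z. (v' has_real_derivative v'' z) (at z)"
    and eqs: "\<And>z. u'' z = p z * u z" "\<And>z. v'' z = r z * v z"
    and pr: "\<And>z. p z > r z"
    and lu: "(u \<longlongrightarrow> 0) at_top" "(u \<longlongrightarrow> 0) at_bot" "(u' \<longlongrightarrow> 0) at_top" "(u' \<longlongrightarrow> 0) at_bot"
    and lv: "(v \<longlongrightarrow> 0) at_top" "(v \<longlongrightarrow> 0) at_bot" "(v' \<longlongrightarrow> 0) at_top" "(v' \<longlongrightarrow> 0) at_bot"
    and ab: "a < ereal x0" "ereal x0 < b" "\<And>x. a < ereal x \<Longrightarrow> ereal x < b \<Longrightarrow> u x > 0"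
       "\<And>a'. a = ereal a' \<Longrightarrow> u a' = 0" "\<And>b'. b = ereal b' \<Longrightarrow> u b' = 0"
    and vpos: "\<And>x. a \<le> ereal x \<Longrightarrow> ereal x \<le> b \<Longrightarrow> v x \<ge> 0" and vx0: "v x0 > 0"
  shows False
proof (rule sturm[OF du dv eqs ab(1,2,3) vpos])
  show "r x \<le> p x" for x using pr[of x] by simp
  show "r x0 < p x0" using pr[of x0] .
  show "0 < v x0" by (rule vx0)
  show "u a' = 0" if "a = ereal a'" for a' using ab(4) that .
  show "u b' = 0" if "b = ereal b'" for b' using ab(5) that .
  show "((\<lambda>z. u' z * v z - u z * v' z) \<longlongrightarrow> 0) at_bot"
    using tendsto_diff[OF tendsto_mult[OF lu(4) lv(2)] tendsto_mult[OF lu(2) lv(4)]] by simp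
  show "((\<lambda>z. u' z * v z - u z * v' z) \<longlongrightarrow> 0) at_top"
    using tendsto_diff[OF tendsto_mult[OF lu(3) lv(1)] tendsto_mult[OF lu(1) lv(3)]] by simp
qed

lemma hits:
  fixes u u' u'' v v' v'' p r :: "real \<Rightarrow> real"
  assumes du: "\<And>z. (u has_real_derivative u' z) (at z)" "\<And>z. (u' has_real_derivative u'' z) (at z)"
    and dv: "\<And>z. (v has_real_derivative v' z) (at z)" "\<And>z. (v' has_real_derivative v'' z) (at z)"
    and eqs: "\<And>z. u'' z = p z * u z" "\<And>z. v'' z = r z * v z"
    and pr: "\<And>z. p z > r z"
    and lu: "(u \<longlongrightarrow> 0) at_top" "(u \<longlongrightarrow> 0) at_bot" "(u' \<longlongrightarrow> 0) at_top" "(u' \<longlongrightarrow> 0) at_bot"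
    and lv: "(v \<longlongrightarrow> 0) at_top" "(v \<longlongrightarrow> 0) at_bot" "(v' \<longlongrightarrow> 0) at_top" "(v' \<longlongrightarrow> 0) at_bot"
    and vzs: "v zs = 0"
    and vR: "(\<forall>x>zs. v x > 0) \<or> (\<forall>x>zs. v x < 0)"
    and vL: "(\<forall>x<zs. v x > 0) \<or> (\<forall>x<zs. v x < 0)"
    and ux0: "u x0 > 0"
  shows "u zs > 0"
proof (rule ccontr)
  assume nz: "\<not> u zs > 0"
  have cu: "isCont u x" for x using du(1) DERIV_isCont by blast
  obtain a b where ab: "a < ereal x0" "ereal x0 < b" "\<And>x. a < ereal x \<Longrightarrow> ereal x < b \<Longrightarrow> u x > 0"
       "\<And>a'. a = ereal a' \<Longrightarrow> u a' = 0" "\<And>b'. b = ereal b' \<Longrightarrow> u b' = 0"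
    using component[OF cu ux0] by blast
  have notin: "\<not> (a < ereal zs \<and> ereal zs < b)" using ab(3)[of zs] nz by auto
  have dvm: "\<And>z. ((\<lambda>x. - v x) has_real_derivative - v' z) (at z)" "\<And>z. ((\<lambda>x. - v' x) has_real_derivative - v'' z) (at z)"
    using dv by (auto intro: DERIV_minus)
  have eqm: "\<And>z. - v'' z = r z * (- v z)" using eqs(2) by simp
  have lvm: "((\<lambda>x. - v x) \<longlongrightarrow> 0) at_top" "((\<lambda>x. - v x) \<longlongrightarrow> 0) at_bot"
    "((\<lambda>x. - v' x) \<longlongrightarrow> 0) at_top" "((\<lambda>x. - v' x) \<longlongrightarrow> 0) at_bot"
    using tendsto_minus[OF lv(1)] tendsto_minus[OF lv(2)] tendsto_minus[OF lv(3)] tendsto_minus[OF lv(4)] by simp_all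
  show False
  proof (cases "b \<le> ereal zs")
    case True
    have "ereal x0 < ereal zs" using ab(2) True by (rule less_le_trans)
    then have x0zs: "x0 < zs" by simp
    have range: "x \<le> zs" if "ereal x \<le> b" for x
    proof -
      have "ereal x \<le> ereal zs" using that True by (rule order_trans)
      then show ?thesis by simp
    qed
    from vL show False
    proof
      assume L: "\<forall>x<zs. v x > 0"
      show False
      proof (rule hits_side[OF du dv eqs pr lu lv ab])
        show "0 \<le> v x" if "a \<le> ereal x" "ereal x \<le> b" for x
        proof (cases "x = zs")
          case True then show ?thesis using vzs by simp
        next
          case False then have "x \<noteq> zs" by simp
          with range[OF that(2)] have "x < zs" by simp
          then show ?thesis using L by (simp add: less_imp_le)
        qed
        show "0 < v x0" using L x0zs by auto
      qed
    next
      assume L: "\<forall>x<zs. v x < 0"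
      show False
      proof (rule hits_side[OF du dvm eqs(1) eqm pr lu lvm ab])
        show "0 \<le> - v x" if "a \<le> ereal x" "ereal x \<le> b" for x
          using range[OF that(2)] L vzs by (cases "x = zs") (auto simp: less_imp_le)
        show "0 < - v x0" using L x0zs by auto
      qed
    qed
  next
    case False
    then have "b > ereal zs" by auto
    then have az: "ereal zs \<le> a" using notin by auto
    have "ereal zs < ereal x0" using az ab(1) by (rule le_less_trans)
    then have x0zs: "zs < x0" by simp
    have range: "zs \<le> x" if "a \<le> ereal x" for x
    proof -
      have "ereal zs \<le> ereal x" using az that by (rule order_trans)
      then show ?thesis by simp
    qed
    from vR show False
    proof
      assume R: "\<forall>x>zs. v x > 0"
      show False
      proof (rule hits_side[OF du dv eqs pr lu lv ab])
        show "0 \<le> v x" if "a \<le> ereal x" "ereal x \<le> b" for x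
        proof (cases "x = zs")
          case True then show ?thesis using vzs by simp
        next
          case False then have "x \<noteq> zs" by simp
          with range[OF that(1)] have "zs < x" by simp
          then show ?thesis using R by (simp add: less_imp_le)
        qed
        show "0 < v x0" using R x0zs by auto
      qed
    next
      assume R: "\<forall>x>zs. v x < 0"
      show False
      proof (rule hits_side[OF du dvm eqs(1) eqm pr lu lvm ab])
        show "0 \<le> - v x" if "a \<le> ereal x" "ereal x \<le> b" for x
          using range[OF that(1)] R vzs by (cases "x = zs") (auto simp: less_imp_le)
        show "0 < - v x0" using R x0zs by auto
      qed
    qed
  qed
qed


context sol begin

definition "Qmu \<mu> z = \<gamma> - \<mu> + s\<^sup>2 / (\<mu> - cc z)"

lemma Q_gt: "\<mu> < 0 \<Longrightarrow> Qmu \<mu> z > Q0 z"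
proof -
  assume m: "\<mu> < 0"
  have c: "cc z > 0" by (rule ccpos)
  have "Qmu \<mu> z - Q0 z = - \<mu> + s\<^sup>2 * (\<mu> / (cc z * (\<mu> - cc z)))"
    using c m by (simp add: Qmu_def Q0_def field_simps)
  moreover have "\<mu> / (cc z * (\<mu> - cc z)) > 0" using c m by (intro divide_neg_neg mult_pos_neg) auto
  then have "s\<^sup>2 * (\<mu> / (cc z * (\<mu> - cc z))) \<ge> 0" by (intro mult_nonneg_nonneg) auto
  ultimately show ?thesis using m by linarith
qed

lemma Q_mono: "\<mu>1 < \<mu>2 \<Longrightarrow> \<mu>2 < 0 \<Longrightarrow> Qmu \<mu>1 z > Qmu \<mu>2 z"
proof -
  assume m: "\<mu>1 < \<mu>2" "\<mu>2 < 0"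
  have c: "cc z > 0" by (rule ccpos)
  have "Qmu \<mu>1 z - Qmu \<mu>2 z = (\<mu>2 - \<mu>1) + s\<^sup>2 * ((\<mu>2 - \<mu>1) / ((\<mu>1 - cc z) * (\<mu>2 - cc z)))"
  proof -
    have n1: "\<mu>1 - cc z \<noteq> 0" "\<mu>2 - cc z \<noteq> 0" using c m by auto
    have "s\<^sup>2 / (\<mu>1 - cc z) - s\<^sup>2 / (\<mu>2 - cc z) = s\<^sup>2 * ((\<mu>2 - \<mu>1) / ((\<mu>1 - cc z) * (\<mu>2 - cc z)))"
      using n1 by (simp add: field_simps)
    then show ?thesis by (simp add: Qmu_def)
  qed
  moreover have "(\<mu>2 - \<mu>1) / ((\<mu>1 - cc z) * (\<mu>2 - cc z)) > 0" using c m
    by (intro divide_pos_pos mult_neg_neg) auto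
  then have "s\<^sup>2 * ((\<mu>2 - \<mu>1) / ((\<mu>1 - cc z) * (\<mu>2 - cc z))) \<ge> 0" by (intro mult_nonneg_nonneg) auto
  ultimately show ?thesis using m by linarith
qed

lemma eig_data:
  assumes "gen_eigenfun \<beta> \<nu> \<kappa> s \<eta> \<mu> M"
  shows "\<exists>M' M''. (\<forall>z. (M has_real_derivative M' z) (at z)) \<and> (\<forall>z. (M' has_real_derivative M'' z) (at z))
     \<and> (\<forall>z. M'' z = (Qmu \<mu> z / \<kappa>) * M z)
     \<and> (M \<longlongrightarrow> 0) at_top \<and> (M \<longlongrightarrow> 0) at_bot \<and> (M' \<longlongrightarrow> 0) at_top \<and> (M' \<longlongrightarrow> 0) at_bot
     \<and> (\<exists>x. M x \<noteq> 0)"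
proof -
  obtain M' M'' where h: "\<forall>z. (M has_real_derivative M' z) (at z)" "\<forall>z. (M' has_real_derivative M'' z) (at z)"
    "\<forall>z. \<kappa> * M'' z = (gam \<beta> \<nu> - \<mu> + s\<^sup>2 / (\<mu> - (\<nu>+2) * \<eta> z powr (-(\<nu>+3)))) * M z"
    "(M \<longlongrightarrow> 0) at_top" "(M \<longlongrightarrow> 0) at_bot" "(M' \<longlongrightarrow> 0) at_top" "(M' \<longlongrightarrow> 0) at_bot"
    and nz: "M \<noteq> (\<lambda>z. 0)"
    using assms unfolding gen_eigenfun_def by blast
  have "M'' z = (Qmu \<mu> z / \<kappa>) * M z" for z
    using h(3)[rule_format, of z] kne by (simp add: Qmu_def cc_def \<gamma>_def field_simps)
  moreover have "\<exists>x. M x \<noteq> 0" using nz by auto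
  ultimately show ?thesis using h by blast
qed

lemma phi_data: "\<exists>zs. w1 zs = 0 \<and> ((\<forall>x>zs. w1 x > 0) \<or> (\<forall>x>zs. w1 x < 0)) \<and> ((\<forall>x<zs. w1 x > 0) \<or> (\<forall>x<zs. w1 x < 0))"
proof -
  obtain zs where zs: "\<And>y. (w y)\<^sup>2 \<le> (w zs)\<^sup>2" "w1 zs = 0" using zstar_exists by blast
  have nz: "w1 x \<noteq> 0" if "x \<noteq> zs" for x using phi_unique_zero[OF zs] that by blast
  show ?thesis
    using sign_right[OF cont_w1, of zs] sign_left[OF cont_w1, of zs] nz zs(2) by (intro exI[of _ zs]) force
qed

lemma w3_eq': "w3 z = (Q0 z / \<kappa>) * w1 z" using w3_eq[of z] kne by (simp add: field_simps)

lemma eig_pos: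
  assumes m: "\<mu> < 0" and ge: "gen_eigenfun \<beta> \<nu> \<kappa> s \<eta> \<mu> M"
    and zs: "w1 zs = 0" "(\<forall>x>zs. w1 x > 0) \<or> (\<forall>x>zs. w1 x < 0)" "(\<forall>x<zs. w1 x > 0) \<or> (\<forall>x<zs. w1 x < 0)"
  shows "\<exists>U U' U''. (\<forall>z. (U has_real_derivative U' z) (at z)) \<and> (\<forall>z. (U' has_real_derivative U'' z) (at z))
     \<and> (\<forall>z. U'' z = (Qmu \<mu> z / \<kappa>) * U z)
     \<and> (U \<longlongrightarrow> 0) at_top \<and> (U \<longlongrightarrow> 0) at_bot \<and> (U' \<longlongrightarrow> 0) at_top \<and> (U' \<longlongrightarrow> 0) at_bot
     \<and> (\<forall>x. U x \<ge> 0) \<and> U zs > 0"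
proof -
  have gen: "U zs > 0 \<and> (\<forall>x. U x \<ge> 0)"
    if d1: "\<And>z. (U has_real_derivative U' z) (at z)" and d2: "\<And>z. (U' has_real_derivative U'' z) (at z)"
      and eq: "\<And>z. U'' z = (Qmu \<mu> z / \<kappa>) * U z"
      and l: "(U \<longlongrightarrow> 0) at_top" "(U \<longlongrightarrow> 0) at_bot" "(U' \<longlongrightarrow> 0) at_top" "(U' \<longlongrightarrow> 0) at_bot"
      and x0: "U x0 > 0" for U U' U'' x0
  proof -
    have pr: "Qmu \<mu> z / \<kappa> > Q0 z / \<kappa>" for z using Q_gt[OF m, of z] \<kappa> by (simp add: divide_strict_right_mono)
    have hit: "V zs > 0" if e1: "\<And>z. (V has_real_derivative V' z) (at z)" and e2: "\<And>z. (V' has_real_derivative V'' z) (at z)"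
      and eqV: "\<And>z. V'' z = (Qmu \<mu> z / \<kappa>) * V z"
      and lV: "(V \<longlongrightarrow> 0) at_top" "(V \<longlongrightarrow> 0) at_bot" "(V' \<longlongrightarrow> 0) at_top" "(V' \<longlongrightarrow> 0) at_bot"
      and y0: "V y0 > 0" for V V' V'' y0
      by (rule hits[OF e1 e2 dw1 dw2 eqV w3_eq' pr lV w1top w1bot w2top w2bot zs y0])
    have pos: "U zs > 0" by (rule hit[OF d1 d2 eq l x0])
    have "U x \<ge> 0" for x
    proof (rule ccontr)
      assume "\<not> U x \<ge> 0"
      then have "- U x > 0" by simp
      have dm: "\<And>z. ((\<lambda>x. - U x) has_real_derivative - U' z) (at z)" "\<And>z. ((\<lambda>x. - U' x) has_real_derivative - U'' z) (at z)"
        using d1 d2 by (auto intro: DERIV_minus)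
      have "- U zs > 0"
        by (rule hit[OF dm, of x]) (use eq in simp, (use tendsto_minus[OF l(1)] tendsto_minus[OF l(2)]
            tendsto_minus[OF l(3)] tendsto_minus[OF l(4)] \<open>- U x > 0\<close> in simp)+)
      with pos show False by simp
    qed
    with pos show ?thesis by blast
  qed
  obtain M' M'' where h: "\<forall>z. (M has_real_derivative M' z) (at z)" "\<forall>z. (M' has_real_derivative M'' z) (at z)"
     "\<forall>z. M'' z = (Qmu \<mu> z / \<kappa>) * M z"
     "(M \<longlongrightarrow> 0) at_top" "(M \<longlongrightarrow> 0) at_bot" "(M' \<longlongrightarrow> 0) at_top" "(M' \<longlongrightarrow> 0) at_bot"
     and ex: "\<exists>x. M x \<noteq> 0"
    using eig_data[OF ge] by blast
  obtain x0 where x0: "M x0 \<noteq> 0" using ex by blast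
  show ?thesis
  proof (cases "M x0 > 0")
    case True
    then show ?thesis using gen[of M M' M'' x0] h by blast
  next
    case False
    then have n: "- M x0 > 0" using x0 by simp
    have dm: "\<And>z. ((\<lambda>x. - M x) has_real_derivative - M' z) (at z)" "\<And>z. ((\<lambda>x. - M' x) has_real_derivative - M'' z) (at z)"
      using h(1,2) by (auto intro: DERIV_minus)
    have eqm: "\<And>z. - M'' z = (Qmu \<mu> z / \<kappa>) * (- M z)" using h(3) by simp
    have lm: "((\<lambda>x. - M x) \<longlongrightarrow> 0) at_top" "((\<lambda>x. - M x) \<longlongrightarrow> 0) at_bot"
      "((\<lambda>x. - M' x) \<longlongrightarrow> 0) at_top" "((\<lambda>x. - M' x) \<longlongrightarrow> 0) at_bot"
      using tendsto_minus[OF h(4)] tendsto_minus[OF h(5)] tendsto_minus[OF h(6)] tendsto_minus[OF h(7)] by simp_all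
    have g: "- M zs > 0 \<and> (\<forall>x. - M x \<ge> 0)" by (rule gen[OF dm eqm lm n])
    show ?thesis
      by (rule exI[of _ "\<lambda>x. - M x"], rule exI[of _ "\<lambda>x. - M' x"], rule exI[of _ "\<lambda>x. - M'' x"])
        (use g dm eqm lm in auto)
  qed
qed

lemma mu_unique_lt:
  assumes m: "\<mu>1 < \<mu>2" "\<mu>2 < 0"
    and g1: "gen_eigenfun \<beta> \<nu> \<kappa> s \<eta> \<mu>1 M1" and g2: "gen_eigenfun \<beta> \<nu> \<kappa> s \<eta> \<mu>2 M2"
  shows False
proof -
  obtain zs where zs: "w1 zs = 0" "(\<forall>x>zs. w1 x > 0) \<or> (\<forall>x>zs. w1 x < 0)" "(\<forall>x<zs. w1 x > 0) \<or> (\<forall>x<zs. w1 x < 0)"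
    using phi_data by blast
  obtain U U' U'' where U: "\<forall>z. (U has_real_derivative U' z) (at z)" "\<forall>z. (U' has_real_derivative U'' z) (at z)"
     "\<forall>z. U'' z = (Qmu \<mu>1 z / \<kappa>) * U z"
     "(U \<longlongrightarrow> 0) at_top" "(U \<longlongrightarrow> 0) at_bot" "(U' \<longlongrightarrow> 0) at_top" "(U' \<longlongrightarrow> 0) at_bot"
     "\<forall>x. U x \<ge> 0" "U zs > 0"
    using eig_pos[OF _ g1 zs] m by (meson order.strict_trans)
  obtain V V' V'' where V: "\<forall>z. (V has_real_derivative V' z) (at z)" "\<forall>z. (V' has_real_derivative V'' z) (at z)"
     "\<forall>z. V'' z = (Qmu \<mu>2 z / \<kappa>) * V z"
     "(V \<longlongrightarrow> 0) at_top" "(V \<longlongrightarrow> 0) at_bot" "(V' \<longlongrightarrow> 0) at_top" "(V' \<longlongrightarrow> 0) at_bot"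
     "\<forall>x. V x \<ge> 0" "V zs > 0"
    using eig_pos[OF m(2) g2 zs] by blast
  have cu: "isCont U x" for x using U(1) DERIV_isCont by blast
  obtain a b where ab: "a < ereal zs" "ereal zs < b" "\<And>x. a < ereal x \<Longrightarrow> ereal x < b \<Longrightarrow> U x > 0"
       "\<And>a'. a = ereal a' \<Longrightarrow> U a' = 0" "\<And>b'. b = ereal b' \<Longrightarrow> U b' = 0"
    using component[OF cu U(9)] by blast
  have pr: "Qmu \<mu>1 z / \<kappa> > Qmu \<mu>2 z / \<kappa>" for z using Q_mono[OF m, of z] \<kappa> by (simp add: divide_strict_right_mono)
  show False
  proof (rule hits_side[of U U' U'' V V' V'' "\<lambda>z. Qmu \<mu>1 z / \<kappa>" "\<lambda>z. Qmu \<mu>2 z / \<kappa>" a zs b])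
  qed (use U V ab pr in auto)
qed

lemma mu_unique:
  assumes "\<mu>1 < 0" "\<mu>2 < 0" "gen_eigenfun \<beta> \<nu> \<kappa> s \<eta> \<mu>1 M1" "gen_eigenfun \<beta> \<nu> \<kappa> s \<eta> \<mu>2 M2"
  shows "\<mu>1 = \<mu>2"
proof (cases \<mu>1 \<mu>2 rule: linorder_cases)
  case less then show ?thesis using mu_unique_lt[of \<mu>1 \<mu>2 M1 M2] assms by blast
next
  case greater then show ?thesis using mu_unique_lt[of \<mu>2 \<mu>1 M2 M1] assms by blast
qed simp

end

lemma bounded_lim0:
  fixes f :: "real \<Rightarrow> real"
  assumes cont: "\<And>x. isCont f x" and lt: "(f \<longlongrightarrow> 0) at_top" and lb: "(f \<longlongrightarrow> 0) at_bot"
  shows "\<exists>C. \<forall>x. \<bar>f x\<bar> \<le> C"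
proof -
  obtain N1 N2 where N: "N2 \<le> N1" "\<And>z. (z \<ge> N1 \<or> z \<le> N2) \<Longrightarrow> \<bar>f z - 0\<bar> < 1"
    using eventually_box[OF lt lb, of 1] by auto
  obtain B where B: "\<And>x. x \<in> {N2..N1} \<Longrightarrow> \<bar>f x\<bar> \<le> B"
    using bound_compact[of N2 N1 f] cont continuous_at_imp_continuous_on by blast
  have "\<bar>f x\<bar> \<le> max 1 B" for x
  proof (cases "x \<ge> N1 \<or> x \<le> N2")
    case True then show ?thesis using N(2)[of x] by auto
  next
    case False then show ?thesis using B[of x] by auto
  qed
  then show ?thesis by blast
qed

lemma cont_meas: "(\<And>x. isCont f x) \<Longrightarrow> (f::real\<Rightarrow>real) \<in> borel_measurable lborel"
  by (simp add: borel_measurable_continuous_onI continuous_at_imp_continuous_on)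

lemma L2_lemma:
  fixes M M' M'' q :: "real \<Rightarrow> real" and B :: real
  assumes d1: "\<And>z. (M has_real_derivative M' z) (at z)" and d2: "\<And>z. (M' has_real_derivative M'' z) (at z)"
    and eq: "\<And>z. M'' z = q z * M z" and cq: "\<And>z. isCont q z" and qb: "\<And>z. \<bar>q z\<bar> \<le> B"
    and l: "(M \<longlongrightarrow> 0) at_top" "(M \<longlongrightarrow> 0) at_bot" "(M' \<longlongrightarrow> 0) at_top" "(M' \<longlongrightarrow> 0) at_bot"
    and sq: "sq_integrable M"
  shows "sq_integrable M'" "sq_integrable M''"
proof -
  have cM: "isCont M z" for z using d1 DERIV_isCont by blast
  have cM': "isCont M' z" for z using d2 DERIV_isCont by blast
  have cM'': "isCont M'' z" for z
  proof -
    have "isCont (\<lambda>z. q z * M z) z" by (intro continuous_intros cq cM)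
    moreover have "(\<lambda>z. q z * M z) = M''" using eq by auto
    ultimately show ?thesis by simp
  qed
  have B0: "B \<ge> 0" using qb[of 0] by simp
  have intM: "integrable lborel (\<lambda>z. (M z)\<^sup>2)" using sq by (simp add: sq_integrable_def)
  have sq2: "(M'' z)\<^sup>2 \<le> B\<^sup>2 * (M z)\<^sup>2" for z
  proof -
    have "(M'' z)\<^sup>2 = (q z)\<^sup>2 * (M z)\<^sup>2" by (simp add: eq power_mult_distrib)
    also have "\<dots> \<le> B\<^sup>2 * (M z)\<^sup>2"
    proof -
      have "\<bar>q z\<bar>\<^sup>2 \<le> B\<^sup>2" using power_mono[OF qb[of z], of 2] by simp
      then have "(q z)\<^sup>2 \<le> B\<^sup>2" by simp
      then show ?thesis by (rule mult_right_mono) simp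
    qed
    finally show ?thesis .
  qed
  show "sq_integrable M''"
    unfolding sq_integrable_def
  proof
    show "M'' \<in> borel_measurable lborel" by (rule cont_meas[OF cM''])
    show "integrable lborel (\<lambda>z. (M'' z)\<^sup>2)"
    proof (rule Bochner_Integration.integrable_bound[where f="\<lambda>z. B\<^sup>2 * (M z)\<^sup>2"])
      show "integrable lborel (\<lambda>z. B\<^sup>2 * (M z)\<^sup>2)" using intM by simp
      show "(\<lambda>z. (M'' z)\<^sup>2) \<in> borel_measurable lborel" by (intro cont_meas continuous_intros cM'')
      show "AE x in lborel. norm ((M'' x)\<^sup>2) \<le> norm (B\<^sup>2 * (M x)\<^sup>2)" using sq2 by simp
    qed
  qed
  have MHK: "(\<lambda>z. (M z)\<^sup>2) integrable_on UNIV" by (rule integrable_on_lborel[OF intM])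
  define IM where "IM = integral UNIV (\<lambda>z. (M z)\<^sup>2)"
  obtain C where C: "\<And>x. \<bar>M x * M' x\<bar> \<le> C"
    using bounded_lim0[of "\<lambda>x. M x * M' x"] cM cM'
      tendsto_mult[OF l(1) l(3)] tendsto_mult[OF l(2) l(4)] by (auto intro: continuous_intros)
  have bnd: "integral {a..b} (\<lambda>x. (M' x)\<^sup>2) \<le> 2 * C + B * IM" if ab: "a \<le> b" for a b
  proof -
    have "((\<lambda>x. M' x * M' x + M'' x * M x) has_integral (M b * M' b - M a * M' a)) {a..b}"
    proof (rule fundamental_theorem_of_calculus[OF ab])
      fix x assume "x \<in> {a..b}"
      have "((\<lambda>x. M x * M' x) has_real_derivative M' x * M' x + M'' x * M x) (at x)"
        by (rule DERIV_mult[OF d1 d2])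
      then show "((\<lambda>x. M x * M' x) has_vector_derivative M' x * M' x + M'' x * M x) (at x within {a..b})"
        by (simp add: has_real_derivative_iff_has_vector_derivative has_vector_derivative_at_within)
    qed
    moreover have iMM: "(\<lambda>x. M'' x * M x) integrable_on {a..b}"
      by (intro integrable_continuous_interval continuous_at_imp_continuous_on ballI continuous_intros cM cM'')
    ultimately have "((\<lambda>x. (M' x * M' x + M'' x * M x) - M'' x * M x) has_integral
        (M b * M' b - M a * M' a) - integral {a..b} (\<lambda>x. M'' x * M x)) {a..b}"
      by (intro has_integral_diff integrable_integral)
    then have I1: "integral {a..b} (\<lambda>x. (M' x)\<^sup>2) = (M b * M' b - M a * M' a) - integral {a..b} (\<lambda>x. M'' x * M x)"
      by (simp add: power2_eq_square integral_unique)
    have iM2: "(\<lambda>x. (M x)\<^sup>2) integrable_on {a..b}"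
      by (intro integrable_continuous_interval continuous_at_imp_continuous_on ballI continuous_intros cM)
    have "- integral {a..b} (\<lambda>x. M'' x * M x) = integral {a..b} (\<lambda>x. - (M'' x * M x))"
      by (simp add: integral_neg iMM)
    also have "\<dots> \<le> integral {a..b} (\<lambda>x. B * (M x)\<^sup>2)"
    proof (rule integral_le)
      show "(\<lambda>x. - (M'' x * M x)) integrable_on {a..b}" using integrable_neg[OF iMM] by simp
      show "(\<lambda>x. B * (M x)\<^sup>2) integrable_on {a..b}" using integrable_cmul[OF iM2, of B] by simp
      fix x
      have "\<bar>M'' x * M x\<bar> = \<bar>q x\<bar> * (M x)\<^sup>2" by (simp add: eq abs_mult power2_eq_square)
      also have "\<dots> \<le> B * (M x)\<^sup>2" using qb[of x] by (intro mult_right_mono) auto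
      finally show "- (M'' x * M x) \<le> B * (M x)\<^sup>2" by linarith
    qed
    also have "\<dots> = B * integral {a..b} (\<lambda>x. (M x)\<^sup>2)" by simp
    also have "\<dots> \<le> B * IM"
      unfolding IM_def using B0 by (intro mult_left_mono integral_subset_le iM2 MHK) auto
    finally have "- integral {a..b} (\<lambda>x. M'' x * M x) \<le> B * IM" .
    moreover have "M b * M' b - M a * M' a \<le> 2 * C" using C[of a] C[of b] by linarith
    ultimately show ?thesis using I1 by linarith
  qed
  define g where "g = (\<lambda>k::nat. \<lambda>x. if x \<in> {- real k..real k} then (M' x)\<^sup>2 else 0)"
  have mc: "(\<lambda>x. (M' x)\<^sup>2) integrable_on UNIV \<and> ((\<lambda>k. integral UNIV (g k)) \<longlongrightarrow> integral UNIV (\<lambda>x. (M' x)\<^sup>2)) sequentially"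
  proof (rule monotone_convergence_increasing)
    fix k
    have "(\<lambda>x. (M' x)\<^sup>2) integrable_on {- real k..real k}"
      by (intro integrable_continuous_interval continuous_at_imp_continuous_on ballI continuous_intros cM')
    then show "g k integrable_on UNIV" unfolding g_def integrable_restrict_UNIV .
  next
    fix k x show "g k x \<le> g (Suc k) x" by (auto simp: g_def)
  next
    fix x :: real
    obtain k0 :: nat where "\<bar>x\<bar> \<le> real k0" using real_arch_simple by blast
    then have "eventually (\<lambda>k. g k x = (M' x)\<^sup>2) sequentially"
      unfolding eventually_sequentially by (intro exI[of _ k0]) (auto simp: g_def)
    then show "((\<lambda>k. g k x) \<longlongrightarrow> (M' x)\<^sup>2) sequentially" by (rule tendsto_eventually)
  next
    have "\<bar>integral UNIV (g k)\<bar> \<le> 2 * C + B * IM" for k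
    proof -
      have "integral UNIV (g k) = integral {- real k..real k} (\<lambda>x. (M' x)\<^sup>2)"
        unfolding g_def by (rule integral_restrict_UNIV)
      moreover have "0 \<le> integral {- real k..real k} (\<lambda>x. (M' x)\<^sup>2)"
        by (intro integral_nonneg integrable_continuous_interval continuous_at_imp_continuous_on ballI continuous_intros cM') auto
      moreover have "integral {- real k..real k} (\<lambda>x. (M' x)\<^sup>2) \<le> 2 * C + B * IM" by (rule bnd) simp
      ultimately show ?thesis by simp
    qed
    then show "bounded (range (\<lambda>k. integral UNIV (g k)))" unfolding bounded_real by blast
  qed
  have meas': "(\<lambda>x. (M' x)\<^sup>2) \<in> borel_measurable lborel" by (intro cont_meas continuous_intros cM')
  have "(\<lambda>x. (M' x)\<^sup>2) absolutely_integrable_on UNIV"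
    using mc by (intro nonnegative_absolutely_integrable_1) auto
  then have "integrable lebesgue (\<lambda>x. (M' x)\<^sup>2)" by (simp add: absolutely_integrable_on_def set_integrable_def)
  then have "integrable lborel (\<lambda>x. (M' x)\<^sup>2)"
    using integrable_completion[of "\<lambda>x. (M' x)\<^sup>2" lborel] meas' by simp
  then show "sq_integrable M'" unfolding sq_integrable_def using cont_meas[OF cM'] by blast
qed


context sol begin

lemma cont_cc: "isCont cc z"
  unfolding cc_def[abs_def] using \<eta>pos[of z] by (intro continuous_intros cont_\<eta>) auto

lemma denom_bound: "\<mu> < 0 \<Longrightarrow> \<bar>\<mu> - cc z\<bar> \<ge> - \<mu>"
  using ccpos[of z] by simp

lemma Ls_part:
  assumes m: "\<mu> < 0" and ge: "gen_eigenfun \<beta> \<nu> \<kappa> s \<eta> \<mu> M"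
  shows "Ls_eigenpair \<beta> \<nu> \<kappa> s \<eta> \<mu> M (\<lambda>z. s * M z / (\<mu> - (\<nu>+2) * \<eta> z powr (-(\<nu>+3))))"
proof -
  obtain M' M'' where h: "\<forall>z. (M has_real_derivative M' z) (at z)" "\<forall>z. (M' has_real_derivative M'' z) (at z)"
    "\<forall>z. \<kappa> * M'' z = (gam \<beta> \<nu> - \<mu> + s\<^sup>2 / (\<mu> - (\<nu>+2) * \<eta> z powr (-(\<nu>+3)))) * M z"
    "(M \<longlongrightarrow> 0) at_top" "(M \<longlongrightarrow> 0) at_bot" "(M' \<longlongrightarrow> 0) at_top" "(M' \<longlongrightarrow> 0) at_bot"
    and sqM: "sq_integrable M" and nz: "M \<noteq> (\<lambda>z. 0)"
    using ge unfolding gen_eigenfun_def by blast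
  have ccf: "(\<nu>+2) * \<eta> z powr (-(\<nu>+3)) = cc z" for z by (simp add: cc_def)
  have dne: "\<mu> - cc z \<noteq> 0" for z using denom_bound[OF m, of z] m by auto
  define V where "V = (\<lambda>z. s * M z / (\<mu> - (\<nu>+2) * \<eta> z powr (-(\<nu>+3))))"
  have Veq: "V z = s * M z / (\<mu> - cc z)" for z unfolding V_def ccf by (rule refl)
  have eqM: "M'' z = (Qmu \<mu> z / \<kappa>) * M z" for z
    using h(3)[rule_format, of z] kne by (simp add: Qmu_def cc_def \<gamma>_def field_simps)
  have cq: "isCont (\<lambda>z. Qmu \<mu> z / \<kappa>) z" for z
    unfolding Qmu_def using dne[of z] kne by (intro continuous_intros cont_cc) auto
  define B where "B = (\<gamma> + \<bar>\<mu>\<bar> + s\<^sup>2 / (- \<mu>)) / \<kappa>"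
  have qb: "\<bar>Qmu \<mu> z / \<kappa>\<bar> \<le> B" for z
  proof -
    have "\<bar>s\<^sup>2 / (\<mu> - cc z)\<bar> = s\<^sup>2 / \<bar>\<mu> - cc z\<bar>" by simp
    also have "\<dots> \<le> s\<^sup>2 / (- \<mu>)"
    proof (rule divide_left_mono)
      show "- \<mu> \<le> \<bar>\<mu> - cc z\<bar>" using denom_bound[OF m, of z] .
      show "0 \<le> s\<^sup>2" by simp
      show "0 < \<bar>\<mu> - cc z\<bar> * - \<mu>" using denom_bound[OF m, of z] m by (intro mult_pos_pos) auto
    qed
    finally have "\<bar>Qmu \<mu> z\<bar> \<le> \<gamma> + \<bar>\<mu>\<bar> + s\<^sup>2 / (- \<mu>)" unfolding Qmu_def using \<gamma>pos by linarith
    then show ?thesis using \<kappa> unfolding B_def by (simp add: divide_right_mono)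
  qed
  have d1: "\<And>z. (M has_real_derivative M' z) (at z)" and d2: "\<And>z. (M' has_real_derivative M'' z) (at z)"
    using h by auto
  have L2: "sq_integrable M'" "sq_integrable M''"
    using L2_lemma[OF d1 d2 eqM cq qb h(4-7) sqM] by auto
  have cM: "isCont M z" for z using d1 DERIV_isCont by blast
  have sqV: "sq_integrable V"
    unfolding sq_integrable_def
  proof
    have cV: "isCont V z" for z unfolding V_def ccf using dne[of z] by (intro continuous_intros cM cont_cc) auto
    show "V \<in> borel_measurable lborel" by (rule cont_meas[OF cV])
    show "integrable lborel (\<lambda>z. (V z)\<^sup>2)"
    proof (rule Bochner_Integration.integrable_bound[where f="\<lambda>z. (s\<^sup>2 / \<mu>\<^sup>2) * (M z)\<^sup>2"])
      show "integrable lborel (\<lambda>z. (s\<^sup>2 / \<mu>\<^sup>2) * (M z)\<^sup>2)" using sqM by (simp add: sq_integrable_def)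
      show "(\<lambda>z. (V z)\<^sup>2) \<in> borel_measurable lborel" by (intro cont_meas continuous_intros cV)
      show "AE x in lborel. norm ((V x)\<^sup>2) \<le> norm ((s\<^sup>2 / \<mu>\<^sup>2) * (M x)\<^sup>2)"
      proof (rule AE_I2)
        fix x
        have "\<bar>\<mu>\<bar> \<le> \<bar>\<mu> - cc x\<bar>" using denom_bound[OF m, of x] m by simp
        then have "\<mu>\<^sup>2 \<le> (\<mu> - cc x)\<^sup>2" by (metis abs_le_square_iff)
        then have "(s * M x)\<^sup>2 / (\<mu> - cc x)\<^sup>2 \<le> (s * M x)\<^sup>2 / \<mu>\<^sup>2"
          using m dne[of x] by (intro divide_left_mono mult_pos_pos) auto
        then show "norm ((V x)\<^sup>2) \<le> norm ((s\<^sup>2 / \<mu>\<^sup>2) * (M x)\<^sup>2)"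
          by (simp add: Veq power_divide power_mult_distrib)
      qed
    qed
  qed
  have e1: "\<forall>z. gam \<beta> \<nu> * M z - \<kappa> * M'' z + s * V z = \<mu> * M z"
  proof
    fix z
    have "\<kappa> * M'' z = (\<gamma> - \<mu> + s\<^sup>2 / (\<mu> - cc z)) * M z" using h(3) unfolding ccf by (simp add: \<gamma>_def)
    then show "gam \<beta> \<nu> * M z - \<kappa> * M'' z + s * V z = \<mu> * M z"
      using dne[of z] by (simp add: Veq \<gamma>_def[symmetric] field_simps power2_eq_square)
  qed
  have e2: "\<forall>z. s * M z + (\<nu>+2) * \<eta> z powr (-(\<nu>+3)) * V z = \<mu> * V z"
  proof
    fix z show "s * M z + (\<nu>+2) * \<eta> z powr (-(\<nu>+3)) * V z = \<mu> * V z"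
      unfolding ccf Veq using dne[of z] by (simp add: field_simps)
  qed
  have pr: "(M, V) \<noteq> ((\<lambda>z. 0), (\<lambda>z. 0))" using nz by simp
  show ?thesis
    unfolding Ls_eigenpair_def V_def[symmetric] using h(1,2) L2 e1 e2 sqM sqV pr by blast
qed

end

theorem mainTheorem7:
  fixes \<beta> \<nu> \<kappa> \<eta>inf s :: real and w \<eta> :: "real \<Rightarrow> real"
  assumes "\<beta> > 0" and "\<nu> > -1" and "\<kappa> > 0" and "\<eta>inf > 0"
    and "soliton \<beta> \<nu> \<kappa> \<eta>inf s w \<eta>"
    and "\<beta> * (\<nu>+1) / (2 * (\<nu>+2) * \<eta>inf powr (\<nu>+3)) < s\<^sup>2"
    and "s\<^sup>2 < \<beta> / \<eta>inf powr (\<nu>+3)"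
  shows "(\<forall>\<mu>1 \<mu>2 M1 M2. \<mu>1 < 0 \<and> \<mu>2 < 0 \<and>
            gen_eigenfun \<beta> \<nu> \<kappa> s \<eta> \<mu>1 M1 \<and> gen_eigenfun \<beta> \<nu> \<kappa> s \<eta> \<mu>2 M2 \<longrightarrow> \<mu>1 = \<mu>2)
       \<and> (\<forall>\<mu> M. \<mu> < 0 \<and> gen_eigenfun \<beta> \<nu> \<kappa> s \<eta> \<mu> M \<longrightarrow>
            Ls_eigenpair \<beta> \<nu> \<kappa> s \<eta> \<mu> M
              (\<lambda>z. s * M z / (\<mu> - (\<nu>+2) * \<eta> z powr (-(\<nu>+3)))))"
proof -
  have "\<beta> * (\<nu>+1) / (2 * (\<nu>+2) * \<eta>inf powr (\<nu>+3)) > 0"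
    using assms(1,2,4) by (intro divide_pos_pos mult_pos_pos) auto
  then have "s\<^sup>2 > 0" using assms(6) by linarith
  then have s0: "s \<noteq> 0" by auto
  interpret sol \<beta> \<nu> \<kappa> \<eta>inf s w \<eta>
    using assms s0 by unfold_locales auto
  show ?thesis using mu_unique Ls_part by blast
qed


end
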